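(* Let $A$ be a residually finite group, $H$ a subgroup of $A$, $B$ a group, $K$ a central subgroup of $B$, and $\phi: H \to K$ an isomorphism. Then there exist an $H$-filtration of $A$ and a $K$-filtration of $B$ which are $(H, K, \phi)$-compatible if any of the following holds: (i) $H = Z(A)$ and $B$ is polycyclic-by-finite; (ii) $H$ is normal in $A$, $A/H$ is residually finite, and $B$ is polycyclic-by-finite; (iii) $A$ and $B$ are polycyclic-by-finite.
   Context: $Z(A)$ is the center. A filtration of a group $A$ is a family $\{A_\lambda\}_{\lambda\in\Lambda}$ of normal finite-index subgroups with $\bigcap A_\lambda=\{e\}$; it is an $H$-filtration if $\bigcap_\lambda HA_\lambda=H$. An $H$-filtration $\{A_\lambda\}$ of $A$ and a $K$-filtration $\{B_\lambda\}$ of $B$ with the same index set are $(H,K,\phi)$-compatible if for each $\lambda$ the map $hA_\lambda\mapsto\phi(h)B_\lambda$ is well defined and an isomorphism $HA_\lambda/A_\lambda\to KB_\lambda/B_\lambda$. *)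

theory Defs
  imports "HOL-Algebra.Algebra"
begin

definition grp_center :: "('a, 'm) monoid_scheme \<Rightarrow> 'a set" where
  "grp_center G = {z \<in> carrier G. \<forall>g \<in> carrier G. z \<otimes>\<^bsub>G\<^esub> g = g \<otimes>\<^bsub>G\<^esub> z}"

definition fin_index_normal :: "'a set \<Rightarrow> ('a, 'm) monoid_scheme \<Rightarrow> bool" where
  "fin_index_normal N G \<longleftrightarrow> N \<lhd> G \<and> finite (rcosets\<^bsub>G\<^esub> N)"

definition residually_finite :: "('a, 'm) monoid_scheme \<Rightarrow> bool" where
  "residually_finite G \<longleftrightarrow> group G \<and>
     (\<forall>g \<in> carrier G. g \<noteq> \<one>\<^bsub>G\<^esub> \<longrightarrow> (\<exists>N. fin_index_normal N G \<and> g \<notin> N))"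

definition polycyclic :: "('a, 'm) monoid_scheme \<Rightarrow> bool" where
  "polycyclic G \<longleftrightarrow> group G \<and> (\<exists>(n::nat) (S :: nat \<Rightarrow> 'a set).
     S 0 = carrier G \<and> S n = {\<one>\<^bsub>G\<^esub>} \<and>
     (\<forall>i < n. subgroup (S i) G \<and> S (Suc i) \<lhd> (G\<lparr>carrier := S i\<rparr>) \<and>
        (\<exists>g \<in> S i. \<forall>x \<in> S i. \<exists>k::int. x \<otimes>\<^bsub>G\<^esub> inv\<^bsub>G\<^esub> (g [^]\<^bsub>G\<^esub> k) \<in> S (Suc i))))"

definition polycyclic_by_finite :: "('a, 'm) monoid_scheme \<Rightarrow> bool" where
  "polycyclic_by_finite G \<longleftrightarrow> group G \<and>
     (\<exists>N. fin_index_normal N G \<and> polycyclic (G\<lparr>carrier := N\<rparr>))"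

text \<open>A filtration of G indexed by I: normal finite-index subgroups with trivial intersection
  (intersection taken inside the group, so an empty family has intersection carrier G).\<close>
definition filtration :: "('a, 'm) monoid_scheme \<Rightarrow> 'i set \<Rightarrow> ('i \<Rightarrow> 'a set) \<Rightarrow> bool" where
  "filtration G I F \<longleftrightarrow> (\<forall>l \<in> I. fin_index_normal (F l) G) \<and>
     carrier G \<inter> (\<Inter>l \<in> I. F l) = {\<one>\<^bsub>G\<^esub>}"

definition H_filtration :: "('a, 'm) monoid_scheme \<Rightarrow> 'a set \<Rightarrow> 'i set \<Rightarrow> ('i \<Rightarrow> 'a set) \<Rightarrow> bool" where
  "H_filtration G H I F \<longleftrightarrow> filtration G I F \<and>
     carrier G \<inter> (\<Inter>l \<in> I. H <#>\<^bsub>G\<^esub> F l) = H"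

definition induced_map ::
  "('a, 'm) monoid_scheme \<Rightarrow> ('b, 'n) monoid_scheme \<Rightarrow> 'a set \<Rightarrow> ('a \<Rightarrow> 'b) \<Rightarrow> 'a set \<Rightarrow> 'b set
   \<Rightarrow> 'a set \<Rightarrow> 'b set" where
  "induced_map A B H phi N M C = M #>\<^bsub>B\<^esub> phi (SOME h. h \<in> H \<and> C = N #>\<^bsub>A\<^esub> h)"

definition compatible ::
  "('a, 'm) monoid_scheme \<Rightarrow> ('b, 'n) monoid_scheme \<Rightarrow> 'a set \<Rightarrow> 'b set \<Rightarrow> ('a \<Rightarrow> 'b)
   \<Rightarrow> 'i set \<Rightarrow> ('i \<Rightarrow> 'a set) \<Rightarrow> ('i \<Rightarrow> 'b set) \<Rightarrow> bool" where
  "compatible A B H K phi I FA FB \<longleftrightarrow>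
     H_filtration A H I FA \<and> H_filtration B K I FB \<and>
     (\<forall>l \<in> I.
        (\<forall>h \<in> H. \<forall>h' \<in> H. FA l #>\<^bsub>A\<^esub> h = FA l #>\<^bsub>A\<^esub> h' \<longrightarrow>
            FB l #>\<^bsub>B\<^esub> phi h = FB l #>\<^bsub>B\<^esub> phi h') \<and>
        induced_map A B H phi (FA l) (FB l)
          \<in> iso ((A\<lparr>carrier := H <#>\<^bsub>A\<^esub> FA l\<rparr>) Mod (FA l))
                ((B\<lparr>carrier := K <#>\<^bsub>B\<^esub> FB l\<rparr>) Mod (FB l)))"

end

theory Submission
  imports Defs
begin

lemma finite_factor:
  assumes "finite (g ` S)" and "\<And>x y. x \<in> S \<Longrightarrow> y \<in> S \<Longrightarrow> g x = g y \<Longrightarrow> f x = f y"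
  shows "finite (f ` S)"
proof -
  define h where "h = (\<lambda>p. f (SOME x. x \<in> S \<and> g x = p))"
  have sel: "\<And>x. x \<in> S \<Longrightarrow> (SOME y. y \<in> S \<and> g y = g x) \<in> S \<and> g (SOME y. y \<in> S \<and> g y = g x) = g x"
    by (rule someI_ex) auto
  have hx: "\<And>x. x \<in> S \<Longrightarrow> h (g x) = f x"
  proof -
    fix x assume x: "x \<in> S"
    have "f (SOME y. y \<in> S \<and> g y = g x) = f x" using sel[OF x] assms(2) x by blast
    then show "h (g x) = f x" unfolding h_def .
  qed
  have "h ` (g ` S) = (h \<circ> g) ` S" by (simp add: image_comp)
  also have "\<dots> = f ` S" by (rule image_cong) (simp_all add: hx)
  finally have "h ` (g ` S) = f ` S" .
  then show ?thesis using assms(1) by (metis finite_imageI)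
qed

lemma card_factor:
  assumes "\<And>x y. x \<in> S \<Longrightarrow> y \<in> S \<Longrightarrow> g x = g y \<longleftrightarrow> f x = f y"
  shows "card (f ` S) = card (g ` S)"
proof -
  define h where "h = (\<lambda>p. f (SOME x. x \<in> S \<and> g x = p))"
  have sel: "\<And>x. x \<in> S \<Longrightarrow> (SOME y. y \<in> S \<and> g y = g x) \<in> S \<and> g (SOME y. y \<in> S \<and> g y = g x) = g x"
    by (rule someI_ex) auto
  have hx: "\<And>x. x \<in> S \<Longrightarrow> h (g x) = f x"
  proof -
    fix x assume x: "x \<in> S"
    have "f (SOME y. y \<in> S \<and> g y = g x) = f x" using sel[OF x] assms x by blast
    then show "h (g x) = f x" unfolding h_def .
  qed
  have "inj_on h (g ` S)"
  proof (rule inj_onI)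
    fix a b assume "a \<in> g ` S" "b \<in> g ` S" "h a = h b"
    then obtain x y where "x \<in> S" "y \<in> S" "a = g x" "b = g y" "f x = f y" using hx by auto
    then show "a = b" using assms by blast
  qed
  moreover have "h ` (g ` S) = f ` S"
  proof -
    have "h ` (g ` S) = (h \<circ> g) ` S" by (simp add: image_comp)
    also have "\<dots> = f ` S" by (rule image_cong) (simp_all add: hx)
    finally show ?thesis .
  qed
  ultimately show ?thesis using card_image by metis
qed

definition fi :: "('a,'m) monoid_scheme \<Rightarrow> 'a set \<Rightarrow> 'a set \<Rightarrow> bool" where
  "fi G S U \<longleftrightarrow> (\<exists>F. finite F \<and> F \<subseteq> S \<and> S \<subseteq> U <#>\<^bsub>G\<^esub> F)"

definition nrm :: "('a,'m) monoid_scheme \<Rightarrow> 'a set \<Rightarrow> 'a set \<Rightarrow> bool" where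
  "nrm G Y P \<longleftrightarrow> (\<forall>x\<in>Y. \<forall>p\<in>P. x \<otimes>\<^bsub>G\<^esub> p \<otimes>\<^bsub>G\<^esub> inv\<^bsub>G\<^esub> x \<in> P)"

definition core :: "('a,'m) monoid_scheme \<Rightarrow> 'a set \<Rightarrow> 'a set \<Rightarrow> 'a set" where
  "core G S V = {x \<in> S. \<forall>s\<in>S. s \<otimes>\<^bsub>G\<^esub> x \<otimes>\<^bsub>G\<^esub> inv\<^bsub>G\<^esub> s \<in> V}"

definition lerf :: "('a,'m) monoid_scheme \<Rightarrow> 'a set \<Rightarrow> bool" where
  "lerf G S \<longleftrightarrow> (\<forall>H g. subgroup H G \<longrightarrow> H \<subseteq> S \<longrightarrow> g \<in> S \<longrightarrow> g \<notin> H \<longrightarrow>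
      (\<exists>U. subgroup U G \<and> H \<subseteq> U \<and> U \<subseteq> S \<and> fi G S U \<and> g \<notin> U))"

context group
begin

lemma set_mult_mem: "x \<in> A <#> B \<longleftrightarrow> (\<exists>a\<in>A. \<exists>b\<in>B. x = a \<otimes> b)"
  unfolding set_mult_def by auto

lemma set_multI: "a \<in> A \<Longrightarrow> b \<in> B \<Longrightarrow> a \<otimes> b \<in> A <#> B"
  unfolding set_mult_def by auto

lemma rcos_mem: "x \<in> A #> b \<longleftrightarrow> (\<exists>a\<in>A. x = a \<otimes> b)"
  unfolding r_coset_def by auto

lemma coset_eq_iff:
  assumes "subgroup U G" "x \<in> carrier G" "y \<in> carrier G"
  shows "U #> x = U #> y \<longleftrightarrow> x \<otimes> inv y \<in> U"
proof
  assume "U #> x = U #> y"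
  then have "x \<in> U #> y" using rcos_self[OF assms(2,1)] by simp
  then show "x \<otimes> inv y \<in> U" using subgroup.rcos_module_imp[OF assms(1) is_group assms(3)] by simp
next
  assume "x \<otimes> inv y \<in> U"
  then have "x \<in> U #> y" using subgroup.rcos_module_rev[OF assms(1) is_group assms(3,2)] by simp
  then show "U #> x = U #> y" using repr_independence[OF _ assms(3,1)] by simp
qed

lemma coset_self_iff:
  assumes "subgroup U G" "x \<in> carrier G"
  shows "U #> x = U \<longleftrightarrow> x \<in> U"
  using coset_join1[OF _ assms(2,1)] coset_join2[OF assms(2,1)] by blast

lemma fi_cosets:
  assumes "subgroup U G" "subgroup S G" "U \<subseteq> S"
  shows "fi G S U \<longleftrightarrow> finite ((\<lambda>x. U #> x) ` S)"
proof
  assume "fi G S U"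
  then obtain F where F: "finite F" "F \<subseteq> S" "S \<subseteq> U <#> F" unfolding fi_def by auto
  have "(\<lambda>x. U #> x) ` S \<subseteq> (\<lambda>x. U #> x) ` F"
  proof
    fix C assume "C \<in> (\<lambda>x. U #> x) ` S"
    then obtain x where x: "x \<in> S" "C = U #> x" by auto
    then obtain u f where uf: "u \<in> U" "f \<in> F" "x = u \<otimes> f" using F(3) set_mult_mem by blast
    have fc: "f \<in> carrier G" using uf F(2) subgroup.mem_carrier[OF assms(2)] by auto
    have "x \<in> U #> f" using uf rcos_mem by auto
    then have "U #> f = U #> x" using repr_independence[OF _ fc assms(1)] by simp
    then show "C \<in> (\<lambda>x. U #> x) ` F" using x uf by auto
  qed
  then show "finite ((\<lambda>x. U #> x) ` S)" using F(1) finite_subset by blast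
next
  assume fin: "finite ((\<lambda>x. U #> x) ` S)"
  define rep where "rep = (\<lambda>C. SOME x. x \<in> S \<and> C = U #> x)"
  have rep: "\<And>x. x \<in> S \<Longrightarrow> rep (U #> x) \<in> S \<and> U #> x = U #> rep (U #> x)"
    unfolding rep_def by (rule someI_ex) auto
  show "fi G S U" unfolding fi_def
  proof (intro exI conjI)
    show "finite (rep ` (\<lambda>x. U #> x) ` S)" using fin by simp
    show "rep ` (\<lambda>x. U #> x) ` S \<subseteq> S" using rep by auto
    show "S \<subseteq> U <#> rep ` (\<lambda>x. U #> x) ` S"
    proof
      fix x assume x: "x \<in> S"
      have xc: "x \<in> carrier G" using x subgroup.mem_carrier[OF assms(2)] by auto
      have r: "rep (U #> x) \<in> S" "U #> x = U #> rep (U #> x)" using rep[OF x] by auto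
      have "x \<in> U #> rep (U #> x)" using r(2) rcos_self[OF xc assms(1)] by simp
      then obtain u where "u \<in> U" "x = u \<otimes> rep (U #> x)" using rcos_mem by auto
      then show "x \<in> U <#> rep ` (\<lambda>x. U #> x) ` S" using x set_mult_mem by blast
    qed
  qed
qed

lemma fi_factor:
  assumes "subgroup U G" "subgroup S G" "U \<subseteq> S" "finite (g ` S)"
    and "\<And>x y. x \<in> S \<Longrightarrow> y \<in> S \<Longrightarrow> g x = g y \<Longrightarrow> x \<otimes> inv y \<in> U"
  shows "fi G S U"
proof -
  have "finite ((\<lambda>x. U #> x) ` S)"
  proof (rule finite_factor[OF assms(4)])
    fix x y assume xy: "x \<in> S" "y \<in> S" "g x = g y"
    then have "x \<otimes> inv y \<in> U" using assms(5) by blast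
    moreover have "x \<in> carrier G" "y \<in> carrier G" using xy subgroup.mem_carrier[OF assms(2)] by auto
    ultimately show "U #> x = U #> y" using coset_eq_iff[OF assms(1)] by blast
  qed
  then show ?thesis using fi_cosets[OF assms(1-3)] by blast
qed

lemma fi_mono:
  assumes "U \<subseteq> V" "fi G S U"
  shows "fi G S V"
proof -
  obtain F where "finite F" "F \<subseteq> S" "S \<subseteq> U <#> F" using assms(2) unfolding fi_def by auto
  moreover have "U <#> F \<subseteq> V <#> F" using mono_set_mult[OF assms(1) order_refl] .
  ultimately show ?thesis unfolding fi_def by blast
qed

lemma fi_refl: "subgroup S G \<Longrightarrow> fi G S S"
  unfolding fi_def
  by (rule exI[of _ "{\<one>}"]) (auto simp: set_mult_mem subgroup.one_closed subgroup.mem_carrier)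

lemma fi_trans:
  assumes "subgroup S G" "subgroup V G" "V \<subseteq> S" "fi G S V" "fi G V U" "subgroup U G"
  shows "fi G S U"
proof -
  obtain F1 where F1: "finite F1" "F1 \<subseteq> S" "S \<subseteq> V <#> F1" using assms(4) unfolding fi_def by auto
  obtain F2 where F2: "finite F2" "F2 \<subseteq> V" "V \<subseteq> U <#> F2" using assms(5) unfolding fi_def by auto
  have "F2 <#> F1 = (\<lambda>(a,b). a \<otimes> b) ` (F2 \<times> F1)" unfolding set_mult_def by auto
  then have fin: "finite (F2 <#> F1)" using F1(1) F2(1) by simp
  have sub: "F2 <#> F1 \<subseteq> S" using F1(2) F2(2) assms(3) subgroup.m_closed[OF assms(1)]
    unfolding set_mult_def by blast
  have "S \<subseteq> U <#> (F2 <#> F1)"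
  proof
    fix x assume "x \<in> S"
    then obtain v f1 where vf: "v \<in> V" "f1 \<in> F1" "x = v \<otimes> f1" using F1(3) set_mult_mem by blast
    then obtain u f2 where uf: "u \<in> U" "f2 \<in> F2" "v = u \<otimes> f2" using F2(3) set_mult_mem by blast
    have c: "u \<in> carrier G" "f2 \<in> carrier G" "f1 \<in> carrier G"
      using subgroup.mem_carrier[OF assms(6) uf(1)] subgroup.mem_carrier[OF assms(2)] uf(2) F2(2)
        subgroup.mem_carrier[OF assms(1)] vf(2) F1(2) by auto
    have xe: "x = u \<otimes> (f2 \<otimes> f1)" using vf uf c by (simp add: m_assoc)
    have "f2 \<otimes> f1 \<in> F2 <#> F1" using uf(2) vf(2) by (rule set_multI)
    from set_multI[OF uf(1) this] show "x \<in> U <#> (F2 <#> F1)" unfolding xe .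
  qed
  then show ?thesis unfolding fi_def using fin sub by blast
qed

end

context group
begin

lemma inv_cancel1 [simp]: "x \<in> carrier G \<Longrightarrow> y \<in> carrier G \<Longrightarrow> inv x \<otimes> (x \<otimes> y) = y"
  by (simp add: m_assoc[symmetric])

lemma inv_cancel2 [simp]: "x \<in> carrier G \<Longrightarrow> y \<in> carrier G \<Longrightarrow> x \<otimes> (inv x \<otimes> y) = y"
  by (simp add: m_assoc[symmetric])

lemma conj_mult:
  assumes "s \<in> carrier G" "a \<in> carrier G" "b \<in> carrier G"
  shows "s \<otimes> (a \<otimes> b) \<otimes> inv s = (s \<otimes> a \<otimes> inv s) \<otimes> (s \<otimes> b \<otimes> inv s)"
  using assms by (simp add: m_assoc)

lemma conj_inv:
  assumes "s \<in> carrier G" "a \<in> carrier G"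
  shows "s \<otimes> inv a \<otimes> inv s = inv (s \<otimes> a \<otimes> inv s)"
  using assms by (simp add: m_assoc inv_mult_group)

lemma conj_conj:
  assumes "s \<in> carrier G" "t \<in> carrier G" "a \<in> carrier G"
  shows "s \<otimes> (t \<otimes> a \<otimes> inv t) \<otimes> inv s = (s \<otimes> t) \<otimes> a \<otimes> inv (s \<otimes> t)"
  using assms by (simp add: m_assoc inv_mult_group)

lemma nrm_prod_comm:
  assumes "subgroup P G" "subgroup Q G" "nrm G Q P"
  shows "P <#> Q = Q <#> P"
proof (rule Set.set_eqI)
  fix z
  show "z \<in> P <#> Q \<longleftrightarrow> z \<in> Q <#> P"
  proof
    assume "z \<in> P <#> Q"
    then obtain p q where pq: "p \<in> P" "q \<in> Q" "z = p \<otimes> q" using set_mult_mem by blast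
    have c: "p \<in> carrier G" "q \<in> carrier G" using pq subgroup.mem_carrier assms by metis+
    have "inv q \<in> Q" using pq subgroup.m_inv_closed assms by metis
    then have "inv q \<otimes> p \<otimes> inv (inv q) \<in> P" using assms(3) pq unfolding nrm_def by blast
    moreover have "z = q \<otimes> (inv q \<otimes> p \<otimes> inv (inv q))" using c pq by (simp add: m_assoc)
    ultimately show "z \<in> Q <#> P" using pq set_multI by metis
  next
    assume "z \<in> Q <#> P"
    then obtain p q where pq: "p \<in> P" "q \<in> Q" "z = q \<otimes> p" using set_mult_mem by blast
    have c: "p \<in> carrier G" "q \<in> carrier G" using pq subgroup.mem_carrier assms by metis+
    have "q \<otimes> p \<otimes> inv q \<in> P" using assms(3) pq unfolding nrm_def by blast
    moreover have "z = (q \<otimes> p \<otimes> inv q) \<otimes> q" using c pq by (simp add: m_assoc)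
    ultimately show "z \<in> P <#> Q" using pq set_multI by metis
  qed
qed

lemma nrm_prod_subgroup:
  assumes "subgroup P G" "subgroup Q G" "nrm G Q P"
  shows "subgroup (P <#> Q) G"
proof (rule subgroupI)
  show "P <#> Q \<subseteq> carrier G" using setmult_subset_G subgroup.subset assms by metis
  show "P <#> Q \<noteq> {}" using set_multI[OF subgroup.one_closed[OF assms(1)] subgroup.one_closed[OF assms(2)]] by blast
next
  fix a assume "a \<in> P <#> Q"
  then obtain p q where pq: "p \<in> P" "q \<in> Q" "a = p \<otimes> q" using set_mult_mem by blast
  have c: "p \<in> carrier G" "q \<in> carrier G" using pq subgroup.mem_carrier assms by metis+
  have "inv a = inv q \<otimes> inv p" using c pq by (simp add: inv_mult_group)
  moreover have "inv q \<in> Q" "inv p \<in> P" using pq subgroup.m_inv_closed assms by metis+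
  ultimately have "inv a \<in> Q <#> P" using set_multI by metis
  then show "inv a \<in> P <#> Q" using nrm_prod_comm[OF assms] by simp
next
  fix a b assume "a \<in> P <#> Q" "b \<in> P <#> Q"
  obtain p q where pq1: "p \<in> P" "q \<in> Q" "a = p \<otimes> q" using \<open>a \<in> P <#> Q\<close> set_mult_mem by blast
  obtain p' q' where pq2: "p' \<in> P" "q' \<in> Q" "b = p' \<otimes> q'" using \<open>b \<in> P <#> Q\<close> set_mult_mem by blast
  note pq = pq1 pq2
  have c: "p \<in> carrier G" "q \<in> carrier G" "p' \<in> carrier G" "q' \<in> carrier G"
    using pq subgroup.mem_carrier assms by metis+
  have "a \<otimes> b = (p \<otimes> (q \<otimes> p' \<otimes> inv q)) \<otimes> (q \<otimes> q')" using c pq by (simp add: m_assoc)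
  moreover have "q \<otimes> p' \<otimes> inv q \<in> P" using assms(3) pq unfolding nrm_def by blast
  then have "p \<otimes> (q \<otimes> p' \<otimes> inv q) \<in> P" using pq subgroup.m_closed assms by metis
  moreover have "q \<otimes> q' \<in> Q" using pq subgroup.m_closed assms by metis
  ultimately show "a \<otimes> b \<in> P <#> Q" using set_multI by metis
qed

lemma nrm_mono: "nrm G Y P \<Longrightarrow> Z \<subseteq> Y \<Longrightarrow> nrm G Z P"
  unfolding nrm_def by blast

lemma subgroup_in_prod1:
  assumes "subgroup Q G" "P \<subseteq> carrier G" shows "P \<subseteq> P <#> Q"
proof
  fix p assume p: "p \<in> P"
  have "p \<otimes> \<one> \<in> P <#> Q" using set_multI[OF p subgroup.one_closed[OF assms(1)]] .
  then show "p \<in> P <#> Q" using p assms(2) by (simp add: subsetD)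
qed

lemma subgroup_in_prod2:
  assumes "subgroup P G" "Q \<subseteq> carrier G" shows "Q \<subseteq> P <#> Q"
proof
  fix q assume q: "q \<in> Q"
  have "\<one> \<otimes> q \<in> P <#> Q" using set_multI[OF subgroup.one_closed[OF assms(1)] q] .
  then show "q \<in> P <#> Q" using q assms(2) by (simp add: subsetD)
qed

lemma prod_in_subgroup:
  assumes "subgroup S G" "P \<subseteq> S" "Q \<subseteq> S" shows "P <#> Q \<subseteq> S"
proof
  fix z assume "z \<in> P <#> Q"
  then obtain p q where "p \<in> P" "q \<in> Q" "z = p \<otimes> q" using set_mult_mem by blast
  then show "z \<in> S" using assms subgroup.m_closed by (metis subsetD)
qed

lemma fi_inter:
  assumes S: "subgroup S G" and U: "subgroup U G" "U \<subseteq> S" "fi G S U"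
    and V: "subgroup V G" "V \<subseteq> S" "fi G S V"
  shows "fi G S (U \<inter> V)"
proof (rule fi_factor[where g = "\<lambda>x. (U #> x, V #> x)"])
  show UV: "subgroup (U \<inter> V) G" using subgroups_Inter_pair U V by blast
  show "U \<inter> V \<subseteq> S" using U by blast
  show "subgroup S G" by fact
  have "(\<lambda>x. (U #> x, V #> x)) ` S \<subseteq> ((\<lambda>x. U #> x) ` S) \<times> ((\<lambda>x. V #> x) ` S)" by auto
  moreover have "finite (((\<lambda>x. U #> x) ` S) \<times> ((\<lambda>x. V #> x) ` S))"
    using fi_cosets U V S by blast
  ultimately show "finite ((\<lambda>x. (U #> x, V #> x)) ` S)" using finite_subset by blast
next
  fix x y assume "x \<in> S" "y \<in> S" "(U #> x, V #> x) = (U #> y, V #> y)"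
  moreover have "x \<in> carrier G" "y \<in> carrier G" using \<open>x \<in> S\<close> \<open>y \<in> S\<close> subgroup.mem_carrier S by metis+
  ultimately show "x \<otimes> inv y \<in> U \<inter> V" using coset_eq_iff U(1) V(1) by blast
qed

lemma fi_Inter:
  assumes "finite F" "subgroup S G" "\<And>U. U \<in> F \<Longrightarrow> subgroup U G \<and> U \<subseteq> S \<and> fi G S U"
  shows "subgroup (S \<inter> \<Inter>F) G \<and> fi G S (S \<inter> \<Inter>F)"
  using assms
proof (induction F rule: finite_induct)
  case empty
  then show ?case using fi_refl by simp
next
  case (insert U F)
  then have IH: "subgroup (S \<inter> \<Inter>F) G" "fi G S (S \<inter> \<Inter>F)" by auto
  have U: "subgroup U G" "U \<subseteq> S" "fi G S U" using insert by auto
  have eq: "S \<inter> \<Inter>(insert U F) = U \<inter> (S \<inter> \<Inter>F)" using U by auto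
  show ?case unfolding eq
    using fi_inter[OF insert(4) U IH(1) _ IH(2)] subgroups_Inter_pair[OF U(1) IH(1)] by blast
qed

lemma core_mem: "x \<in> core G S V \<longleftrightarrow> x \<in> S \<and> (\<forall>s\<in>S. s \<otimes> x \<otimes> inv s \<in> V)"
  unfolding core_def by simp

lemma core_props:
  assumes S: "subgroup S G" and V: "subgroup V G" "V \<subseteq> S"
  shows "subgroup (core G S V) G" "core G S V \<subseteq> V" "nrm G S (core G S V)" "core G S V \<subseteq> S"
proof -
  have Sc: "\<And>x. x \<in> S \<Longrightarrow> x \<in> carrier G" using S subgroup.mem_carrier by metis
  have one: "\<one> \<in> S" using S by (rule subgroup.one_closed)
  show "core G S V \<subseteq> S" unfolding core_def by blast
  show "core G S V \<subseteq> V"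
  proof
    fix x assume "x \<in> core G S V"
    then have x: "x \<in> S" "\<one> \<otimes> x \<otimes> inv \<one> \<in> V" unfolding core_mem using one by auto
    have "\<one> \<otimes> x \<otimes> inv \<one> = x" using Sc[OF x(1)] by simp
    then show "x \<in> V" using x(2) by simp
  qed
  show "subgroup (core G S V) G"
  proof (rule subgroupI)
    show "core G S V \<subseteq> carrier G" unfolding core_def using Sc by blast
    have "\<forall>s\<in>S. s \<otimes> \<one> \<otimes> inv s \<in> V"
    proof
      fix s assume "s \<in> S"
      then have "s \<otimes> \<one> \<otimes> inv s = \<one>" using Sc by simp
      then show "s \<otimes> \<one> \<otimes> inv s \<in> V" using subgroup.one_closed[OF V(1)] by simp
    qed
    then have "\<one> \<in> core G S V" unfolding core_mem using one by blast
    then show "core G S V \<noteq> {}" by blast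
  next
    fix a assume a: "a \<in> core G S V"
    then have aS: "a \<in> S" unfolding core_mem by blast
    have "\<forall>s\<in>S. s \<otimes> inv a \<otimes> inv s \<in> V"
    proof
      fix s assume s: "s \<in> S"
      have "s \<otimes> a \<otimes> inv s \<in> V" using a s unfolding core_mem by blast
      then have "inv (s \<otimes> a \<otimes> inv s) \<in> V" by (rule subgroup.m_inv_closed[OF V(1)])
      moreover have "s \<otimes> inv a \<otimes> inv s = inv (s \<otimes> a \<otimes> inv s)" by (rule conj_inv[OF Sc[OF s] Sc[OF aS]])
      ultimately show "s \<otimes> inv a \<otimes> inv s \<in> V" by simp
    qed
    moreover have "inv a \<in> S" by (rule subgroup.m_inv_closed[OF S aS])
    ultimately show "inv a \<in> core G S V" unfolding core_mem by blast
  next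
    fix a b assume ab: "a \<in> core G S V" "b \<in> core G S V"
    then have aS: "a \<in> S" and bS: "b \<in> S" unfolding core_mem by auto
    have "\<forall>s\<in>S. s \<otimes> (a \<otimes> b) \<otimes> inv s \<in> V"
    proof
      fix s assume s: "s \<in> S"
      have "s \<otimes> a \<otimes> inv s \<in> V" "s \<otimes> b \<otimes> inv s \<in> V" using ab s unfolding core_mem by auto
      then have "(s \<otimes> a \<otimes> inv s) \<otimes> (s \<otimes> b \<otimes> inv s) \<in> V" by (rule subgroup.m_closed[OF V(1)])
      moreover have "s \<otimes> (a \<otimes> b) \<otimes> inv s = (s \<otimes> a \<otimes> inv s) \<otimes> (s \<otimes> b \<otimes> inv s)"
        by (rule conj_mult[OF Sc[OF s] Sc[OF aS] Sc[OF bS]])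
      ultimately show "s \<otimes> (a \<otimes> b) \<otimes> inv s \<in> V" by simp
    qed
    moreover have "a \<otimes> b \<in> S" using subgroup.m_closed[OF S aS bS] .
    ultimately show "a \<otimes> b \<in> core G S V" unfolding core_mem by blast
  qed
  show "nrm G S (core G S V)" unfolding nrm_def
  proof (intro ballI)
    fix x c assume x: "x \<in> S" and c: "c \<in> core G S V"
    then have cS: "c \<in> S" unfolding core_mem by blast
    have "x \<otimes> c \<in> S" using subgroup.m_closed[OF S x cS] .
    then have xcx: "x \<otimes> c \<otimes> inv x \<in> S" using subgroup.m_closed[OF S _ subgroup.m_inv_closed[OF S x]] by simp
    have "\<forall>s\<in>S. s \<otimes> (x \<otimes> c \<otimes> inv x) \<otimes> inv s \<in> V"
    proof
      fix s assume s: "s \<in> S"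
      have "s \<otimes> x \<in> S" using subgroup.m_closed[OF S s x] .
      then have "(s \<otimes> x) \<otimes> c \<otimes> inv (s \<otimes> x) \<in> V" using c unfolding core_mem by blast
      moreover have "s \<otimes> (x \<otimes> c \<otimes> inv x) \<otimes> inv s = (s \<otimes> x) \<otimes> c \<otimes> inv (s \<otimes> x)"
        by (rule conj_conj[OF Sc[OF s] Sc[OF x] Sc[OF cS]])
      ultimately show "s \<otimes> (x \<otimes> c \<otimes> inv x) \<otimes> inv s \<in> V" by simp
    qed
    then show "x \<otimes> c \<otimes> inv x \<in> core G S V" unfolding core_mem using xcx by blast
  qed
qed

lemma core_fi:
  assumes S: "subgroup S G" and V: "subgroup V G" "V \<subseteq> S" "fi G S V"
  shows "fi G S (core G S V)"
proof -
  define Cos where "Cos = (\<lambda>y. V #> y) ` S"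
  have finC: "finite Cos" unfolding Cos_def using fi_cosets V S by blast
  have Sc: "\<And>x. x \<in> S \<Longrightarrow> x \<in> carrier G" using S subgroup.mem_carrier by metis
  show ?thesis
  proof (rule fi_factor[where g = "\<lambda>x. (\<lambda>C\<in>Cos. C #> x)"])
    show "subgroup (core G S V) G" "core G S V \<subseteq> S" using core_props[OF S V(1,2)] by auto
    show "subgroup S G" by fact
    have "(\<lambda>x. (\<lambda>C\<in>Cos. C #> x)) ` S \<subseteq> Cos \<rightarrow>\<^sub>E Cos"
    proof
      fix f assume "f \<in> (\<lambda>x. (\<lambda>C\<in>Cos. C #> x)) ` S"
      then obtain x where x: "x \<in> S" "f = (\<lambda>C\<in>Cos. C #> x)" by auto
      have "\<And>C. C \<in> Cos \<Longrightarrow> C #> x \<in> Cos"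
      proof -
        fix C assume "C \<in> Cos"
        then obtain y where y: "y \<in> S" "C = V #> y" unfolding Cos_def by auto
        have "C #> x = V #> (y \<otimes> x)" using y x coset_mult_assoc Sc subgroup.subset V(1) by metis
        moreover have "y \<otimes> x \<in> S" using x y S subgroup.m_closed by metis
        ultimately show "C #> x \<in> Cos" unfolding Cos_def by blast
      qed
      then show "f \<in> Cos \<rightarrow>\<^sub>E Cos" using x by auto
    qed
    moreover have "finite (Cos \<rightarrow>\<^sub>E Cos)" using finC by (simp add: finite_PiE)
    ultimately show "finite ((\<lambda>x. (\<lambda>C\<in>Cos. C #> x)) ` S)" using finite_subset by blast
  next
    fix x y assume x: "x \<in> S" and y: "y \<in> S" and eq: "(\<lambda>C\<in>Cos. C #> x) = (\<lambda>C\<in>Cos. C #> y)"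
    have "x \<otimes> inv y \<in> S" using x y S by (metis subgroup.m_closed subgroup.m_inv_closed)
    moreover have "\<forall>s\<in>S. s \<otimes> (x \<otimes> inv y) \<otimes> inv s \<in> V"
    proof
      fix s assume s: "s \<in> S"
      have "V #> s \<in> Cos" unfolding Cos_def using s by blast
      then have "(V #> s) #> x = (V #> s) #> y" using eq by (metis restrict_apply')
      then have "V #> (s \<otimes> x) = V #> (s \<otimes> y)" using coset_mult_assoc Sc s x y subgroup.subset V(1) by metis
      then have "(s \<otimes> x) \<otimes> inv (s \<otimes> y) \<in> V" using coset_eq_iff V(1) Sc s x y m_closed by metis
      moreover have "(s \<otimes> x) \<otimes> inv (s \<otimes> y) = s \<otimes> (x \<otimes> inv y) \<otimes> inv s"
        using Sc s x y by (simp add: m_assoc inv_mult_group)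
      ultimately show "s \<otimes> (x \<otimes> inv y) \<otimes> inv s \<in> V" by simp
    qed
    ultimately show "x \<otimes> inv y \<in> core G S V" unfolding core_def by blast
  qed
qed

end

context group
begin

lemma cos_closed:
  assumes N: "subgroup N G" and W: "subgroup W G" "W \<subseteq> N"
    and C: "C \<in> (\<lambda>x. W #> x) ` N" and n: "n \<in> N"
  shows "C #> n \<in> (\<lambda>x. W #> x) ` N"
proof -
  obtain y where y: "y \<in> N" "C = W #> y" using C by auto
  have yc: "y \<in> carrier G" "n \<in> carrier G" using y n subgroup.mem_carrier[OF N] by auto
  have "C #> n = W #> (y \<otimes> n)" using coset_mult_assoc[OF subgroup.subset[OF W(1)] yc] y by simp
  moreover have "y \<otimes> n \<in> N" by (rule subgroup.m_closed[OF N y(1) n])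
  ultimately show ?thesis by blast
qed

lemma cos_sub:
  assumes "subgroup W G" "subgroup N G" "C \<in> (\<lambda>x. W #> x) ` N" shows "C \<subseteq> carrier G"
proof -
  obtain x where "x \<in> N" "C = W #> x" using assms(3) by auto
  then show ?thesis using r_coset_subset_G[OF subgroup.subset[OF assms(1)] subgroup.mem_carrier[OF assms(2)]] by simp
qed

lemma act_agree:
  assumes Y: "Y \<subseteq> carrier G" and NY: "N = generate G Y"
    and W1: "subgroup W1 G" "W1 \<subseteq> N" and W2: "subgroup W2 G" "W2 \<subseteq> N"
    and c1: "bij_betw c1 ((\<lambda>x. W1 #> x) ` N) {0..<(k::nat)}"
    and c2: "bij_betw c2 ((\<lambda>x. W2 #> x) ` N) {0..<k}"
    and agree: "\<And>y i. y \<in> Y \<Longrightarrow> i < k \<Longrightarrow>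
       c1 (inv_into ((\<lambda>x. W1 #> x) ` N) c1 i #> y) = c2 (inv_into ((\<lambda>x. W2 #> x) ` N) c2 i #> y)"
  shows "n \<in> N \<Longrightarrow> i < k \<Longrightarrow>
       c1 (inv_into ((\<lambda>x. W1 #> x) ` N) c1 i #> n) = c2 (inv_into ((\<lambda>x. W2 #> x) ` N) c2 i #> n)"
proof -
  define Cos1 where "Cos1 = (\<lambda>x. W1 #> x) ` N"
  define Cos2 where "Cos2 = (\<lambda>x. W2 #> x) ` N"
  define d1 where "d1 = inv_into Cos1 c1"
  define d2 where "d2 = inv_into Cos2 c2"
  have N: "subgroup N G" unfolding NY using generate_is_subgroup[OF Y] .
  have d1: "\<And>i. i < k \<Longrightarrow> d1 i \<in> Cos1 \<and> c1 (d1 i) = i"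
  proof -
    fix i assume "i < k"
    then have i: "i \<in> {0..<k}" by simp
    show "d1 i \<in> Cos1 \<and> c1 (d1 i) = i" unfolding d1_def Cos1_def
      using bij_betw_apply[OF bij_betw_inv_into[OF c1] i] bij_betw_inv_into_right[OF c1 i] by simp
  qed
  have d2: "\<And>i. i < k \<Longrightarrow> d2 i \<in> Cos2 \<and> c2 (d2 i) = i"
  proof -
    fix i assume "i < k"
    then have i: "i \<in> {0..<k}" by simp
    show "d2 i \<in> Cos2 \<and> c2 (d2 i) = i" unfolding d2_def Cos2_def
      using bij_betw_apply[OF bij_betw_inv_into[OF c2] i] bij_betw_inv_into_right[OF c2 i] by simp
  qed
  have dc1: "\<And>C. C \<in> Cos1 \<Longrightarrow> d1 (c1 C) = C" unfolding d1_def Cos1_def by (rule bij_betw_inv_into_left[OF c1])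
  have dc2: "\<And>C. C \<in> Cos2 \<Longrightarrow> d2 (c2 C) = C" unfolding d2_def Cos2_def by (rule bij_betw_inv_into_left[OF c2])
  have cr1: "\<And>C. C \<in> Cos1 \<Longrightarrow> c1 C < k"
  proof -
    fix C assume "C \<in> Cos1"
    then have "c1 C \<in> {0..<k}" using bij_betw_apply[OF c1] unfolding Cos1_def by blast
    then show "c1 C < k" by simp
  qed
  have cr2: "\<And>C. C \<in> Cos2 \<Longrightarrow> c2 C < k"
  proof -
    fix C assume "C \<in> Cos2"
    then have "c2 C \<in> {0..<k}" using bij_betw_apply[OF c2] unfolding Cos2_def by blast
    then show "c2 C < k" by simp
  qed
  have cl1: "\<And>C n. C \<in> Cos1 \<Longrightarrow> n \<in> N \<Longrightarrow> C #> n \<in> Cos1" unfolding Cos1_def by (rule cos_closed[OF N W1])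
  have cl2: "\<And>C n. C \<in> Cos2 \<Longrightarrow> n \<in> N \<Longrightarrow> C #> n \<in> Cos2" unfolding Cos2_def by (rule cos_closed[OF N W2])
  have sub1: "\<And>C. C \<in> Cos1 \<Longrightarrow> C \<subseteq> carrier G" unfolding Cos1_def by (rule cos_sub[OF W1(1) N])
  have sub2: "\<And>C. C \<in> Cos2 \<Longrightarrow> C \<subseteq> carrier G" unfolding Cos2_def by (rule cos_sub[OF W2(1) N])
  have YN: "Y \<subseteq> N"
  proof
    fix y assume "y \<in> Y" then show "y \<in> N" unfolding NY by (rule generate.incl)
  qed
  have main: "\<forall>i<k. c1 (d1 i #> n) = c2 (d2 i #> n)" if n: "n \<in> generate G Y" for n
    using n
  proof (induction n rule: generate.induct)
    case one
    show ?case
    proof (intro allI impI)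
      fix i assume i: "i < k"
      have "d1 i #> \<one> = d1 i" using sub1 d1[OF i] by simp
      moreover have "d2 i #> \<one> = d2 i" using sub2 d2[OF i] by simp
      ultimately show "c1 (d1 i #> \<one>) = c2 (d2 i #> \<one>)" using d1[OF i] d2[OF i] by simp
    qed
  next
    case (incl y)
    then show ?case using agree unfolding d1_def d2_def Cos1_def Cos2_def by blast
  next
    case (inv y)
    show ?case
    proof (intro allI impI)
      fix i assume i: "i < k"
      have yc: "y \<in> carrier G" using inv Y by blast
      have yN: "y \<in> N" "inv y \<in> N" using inv YN subgroup.m_inv_closed[OF N] by auto
      define j where "j = c1 (d1 i #> inv y)"
      have inC1: "d1 i #> inv y \<in> Cos1" using cl1 d1[OF i] yN by blast
      have j: "j < k" unfolding j_def using cr1 inC1 by blast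
      have dj: "d1 j = d1 i #> inv y" unfolding j_def using dc1 inC1 by blast
      have "d1 j #> y = d1 i" unfolding dj using coset_mult_assoc[OF sub1[OF d1[OF i, THEN conjunct1]] inv_closed[OF yc] yc]
        using sub1 d1[OF i] yc by simp
      then have "c1 (d1 j #> y) = i" using d1[OF i] by simp
      then have e2: "c2 (d2 j #> y) = i" using agree[OF inv(1) j] unfolding d1_def d2_def Cos1_def Cos2_def by simp
      have inC2: "d2 j #> y \<in> Cos2" using cl2 d2[OF j] yN by blast
      have "d2 j #> y = d2 i" using dc2[OF inC2] e2 by simp
      then have "d2 j #> y #> inv y = d2 i #> inv y" by simp
      then have "d2 j = d2 i #> inv y"
        using coset_mult_assoc[OF sub2[OF d2[OF j, THEN conjunct1]] yc inv_closed[OF yc]] sub2 d2[OF j] yc by simp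
      then have "c2 (d2 i #> inv y) = j" using d2[OF j] by simp
      then show "c1 (d1 i #> inv y) = c2 (d2 i #> inv y)" unfolding j_def by simp
    qed
  next
    case (eng a b)
    show ?case
    proof (intro allI impI)
      fix i assume i: "i < k"
      have aN: "a \<in> N" "b \<in> N" using eng(1,2) NY by auto
      have ac: "a \<in> carrier G" "b \<in> carrier G" using aN subgroup.mem_carrier[OF N] by auto
      define i' where "i' = c1 (d1 i #> a)"
      have in1: "d1 i #> a \<in> Cos1" using cl1 d1[OF i] aN by blast
      have in2: "d2 i #> a \<in> Cos2" using cl2 d2[OF i] aN by blast
      have i': "i' < k" unfolding i'_def using cr1 in1 by blast
      have i'2: "i' = c2 (d2 i #> a)" unfolding i'_def using eng.IH(1) i by blast
      have "c1 (d1 i #> (a \<otimes> b)) = c1 ((d1 i #> a) #> b)"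
        using coset_mult_assoc[OF sub1[OF d1[OF i, THEN conjunct1]] ac] by simp
      also have "\<dots> = c1 (d1 i' #> b)" unfolding i'_def using dc1[OF in1] by simp
      also have "\<dots> = c2 (d2 i' #> b)" using eng.IH(2) i' by blast
      also have "\<dots> = c2 ((d2 i #> a) #> b)" unfolding i'2 using dc2[OF in2] by simp
      also have "\<dots> = c2 (d2 i #> (a \<otimes> b))"
        using coset_mult_assoc[OF sub2[OF d2[OF i, THEN conjunct1]] ac] by simp
      finally show "c1 (d1 i #> (a \<otimes> b)) = c2 (d2 i #> (a \<otimes> b))" .
    qed
  qed
  show "n \<in> N \<Longrightarrow> i < k \<Longrightarrow>
       c1 (inv_into ((\<lambda>x. W1 #> x) ` N) c1 i #> n) = c2 (inv_into ((\<lambda>x. W2 #> x) ` N) c2 i #> n)"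
    using main NY unfolding d1_def d2_def Cos1_def Cos2_def by blast
qed

end

context group
begin

lemma fg_finite_subgroups:
  assumes Yf: "finite Y" and Y: "Y \<subseteq> carrier G"
  shows "finite {W. subgroup W G \<and> W \<subseteq> generate G Y \<and> finite ((\<lambda>x. W #> x) ` generate G Y)
            \<and> card ((\<lambda>x. W #> x) ` generate G Y) = k}"
proof -
  define N where "N = generate G Y"
  have N: "subgroup N G" unfolding N_def using generate_is_subgroup[OF Y] .
  define Fam where "Fam = {W. subgroup W G \<and> W \<subseteq> N \<and> finite ((\<lambda>x. W #> x) ` N)
            \<and> card ((\<lambda>x. W #> x) ` N) = k}"
  define Cos where "Cos = (\<lambda>W. (\<lambda>x. W #> x) ` N)"
  define cf where "cf = (\<lambda>W. SOME c. bij_betw c (Cos W) {0..<k})"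
  have cf: "bij_betw (cf W) (Cos W) {0..<k}" if W: "W \<in> Fam" for W
  proof -
    have "finite (Cos W)" "card (Cos W) = k" using W unfolding Fam_def Cos_def by auto
    then have "\<exists>c. bij_betw c (Cos W) {0..<k}" using ex_bij_betw_finite_nat by metis
    then show ?thesis unfolding cf_def by (rule someI_ex)
  qed
  have one: "\<one> \<in> N" using subgroup.one_closed[OF N] .
  have WC: "W \<in> Cos W" if W: "W \<in> Fam" for W
  proof -
    have "subgroup W G" using W unfolding Fam_def by auto
    then have "W #> \<one> = W" using coset_mult_one[OF subgroup.subset] by blast
    then show ?thesis unfolding Cos_def using one by force
  qed
  define code where "code = (\<lambda>W. (cf W W, \<lambda>y\<in>Y. \<lambda>i\<in>{0..<k}. cf W (inv_into (Cos W) (cf W) i #> y)))"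
  have code_in: "code ` Fam \<subseteq> {0..<k} \<times> (Y \<rightarrow>\<^sub>E ({0..<k} \<rightarrow>\<^sub>E {0..<k}))"
  proof
    fix z assume "z \<in> code ` Fam"
    then obtain W where W: "W \<in> Fam" "z = code W" by auto
    have sg: "subgroup W G" "W \<subseteq> N" using W unfolding Fam_def by auto
    have "cf W W \<in> {0..<k}" using bij_betw_apply[OF cf[OF W(1)] WC[OF W(1)]] .
    moreover have "(\<lambda>y\<in>Y. \<lambda>i\<in>{0..<k}. cf W (inv_into (Cos W) (cf W) i #> y)) \<in> Y \<rightarrow>\<^sub>E ({0..<k} \<rightarrow>\<^sub>E {0..<k})"
    proof -
      have "cf W (inv_into (Cos W) (cf W) i #> y) \<in> {0..<k}" if y: "y \<in> Y" and i: "i \<in> {0..<k}" for y i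
      proof -
        have "inv_into (Cos W) (cf W) i \<in> Cos W" using bij_betw_apply[OF bij_betw_inv_into[OF cf[OF W(1)]] i] .
        moreover have "y \<in> N" unfolding N_def using y by (rule generate.incl)
        ultimately have "inv_into (Cos W) (cf W) i #> y \<in> Cos W" unfolding Cos_def by (rule cos_closed[OF N sg])
        then show ?thesis by (rule bij_betw_apply[OF cf[OF W(1)]])
      qed
      then show ?thesis by auto
    qed
    ultimately show "z \<in> {0..<k} \<times> (Y \<rightarrow>\<^sub>E ({0..<k} \<rightarrow>\<^sub>E {0..<k}))" unfolding W(2) code_def by blast
  qed
  have inj: "inj_on code Fam"
  proof (rule inj_onI)
    fix W1 W2 assume W1: "W1 \<in> Fam" and W2: "W2 \<in> Fam" and eq: "code W1 = code W2"
    have sg1: "subgroup W1 G" "W1 \<subseteq> N" using W1 unfolding Fam_def by auto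
    have sg2: "subgroup W2 G" "W2 \<subseteq> N" using W2 unfolding Fam_def by auto
    have e1: "cf W1 W1 = cf W2 W2" using eq unfolding code_def by simp
    have e2: "(\<lambda>y\<in>Y. \<lambda>i\<in>{0..<k}. cf W1 (inv_into (Cos W1) (cf W1) i #> y))
             = (\<lambda>y\<in>Y. \<lambda>i\<in>{0..<k}. cf W2 (inv_into (Cos W2) (cf W2) i #> y))" using eq unfolding code_def by simp
    have agree: "cf W1 (inv_into (Cos W1) (cf W1) i #> y) = cf W2 (inv_into (Cos W2) (cf W2) i #> y)"
      if y: "y \<in> Y" and i: "i < k" for y i
    proof -
      have "(\<lambda>y\<in>Y. \<lambda>i\<in>{0..<k}. cf W1 (inv_into (Cos W1) (cf W1) i #> y)) y i
          = (\<lambda>y\<in>Y. \<lambda>i\<in>{0..<k}. cf W2 (inv_into (Cos W2) (cf W2) i #> y)) y i" using e2 by simp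
      then show ?thesis using y i by simp
    qed
    have act: "\<And>n i. n \<in> N \<Longrightarrow> i < k \<Longrightarrow>
       cf W1 (inv_into (Cos W1) (cf W1) i #> n) = cf W2 (inv_into (Cos W2) (cf W2) i #> n)"
      using act_agree[OF Y N_def sg1 sg2 cf[OF W1, unfolded Cos_def] cf[OF W2, unfolded Cos_def]] agree
      unfolding Cos_def by blast
    define i0 where "i0 = cf W1 W1"
    have i0: "i0 < k" unfolding i0_def using bij_betw_apply[OF cf[OF W1] WC[OF W1]] by simp
    have d1: "inv_into (Cos W1) (cf W1) i0 = W1" unfolding i0_def by (rule bij_betw_inv_into_left[OF cf[OF W1] WC[OF W1]])
    have d2: "inv_into (Cos W2) (cf W2) i0 = W2" unfolding i0_def e1 by (rule bij_betw_inv_into_left[OF cf[OF W2] WC[OF W2]])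
    have mem: "n \<in> W1 \<longleftrightarrow> n \<in> W2" if n: "n \<in> N" for n
    proof -
      have nc: "n \<in> carrier G" using n subgroup.mem_carrier[OF N] by blast
      have C1: "W1 #> n \<in> Cos W1" unfolding Cos_def using cos_closed[OF N sg1 _ n] WC[OF W1] unfolding Cos_def by blast
      have C2: "W2 #> n \<in> Cos W2" unfolding Cos_def using cos_closed[OF N sg2 _ n] WC[OF W2] unfolding Cos_def by blast
      have "n \<in> W1 \<longleftrightarrow> W1 #> n = W1" using coset_self_iff[OF sg1(1) nc] by simp
      also have "\<dots> \<longleftrightarrow> cf W1 (W1 #> n) = cf W1 W1"
        using bij_betw_imp_inj_on[OF cf[OF W1]] C1 WC[OF W1] by (metis inj_on_contraD)
      also have "\<dots> \<longleftrightarrow> cf W2 (W2 #> n) = i0" using act[OF n i0] d1 d2 unfolding i0_def by simp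
      also have "\<dots> \<longleftrightarrow> cf W2 (W2 #> n) = cf W2 W2" unfolding i0_def e1 ..
      also have "\<dots> \<longleftrightarrow> W2 #> n = W2"
        using bij_betw_imp_inj_on[OF cf[OF W2]] C2 WC[OF W2] by (metis inj_on_contraD)
      also have "\<dots> \<longleftrightarrow> n \<in> W2" using coset_self_iff[OF sg2(1) nc] by simp
      finally show ?thesis .
    qed
    show "W1 = W2"
    proof (rule Set.set_eqI)
      fix n show "n \<in> W1 \<longleftrightarrow> n \<in> W2" using mem sg1(2) sg2(2) by (cases "n \<in> N") auto
    qed
  qed
  have "finite ({0..<k} \<times> (Y \<rightarrow>\<^sub>E ({0..<k} \<rightarrow>\<^sub>E {0..<(k::nat)})))"
    using Yf by (simp add: finite_PiE)
  then have "finite Fam" using inj_on_finite[OF inj code_in] by blast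
  then show ?thesis unfolding Fam_def N_def .
qed

end

context group
begin

lemma cyc_fi:
  assumes S: "subgroup S G" and P: "subgroup P G" "P \<subseteq> S" and NP: "N \<subseteq> P"
    and t: "t \<in> S" and cyc: "\<And>x. x \<in> S \<Longrightarrow> \<exists>k::int. x \<otimes> inv (t [^] k) \<in> N"
    and m: "(m::int) > 0" "t [^] m \<in> P"
  shows "fi G S P"
  unfolding fi_def
proof (intro exI conjI)
  have tc: "t \<in> carrier G" using t subgroup.mem_carrier[OF S] by blast
  define F where "F = (\<lambda>j::int. t [^] j) ` {0..<m}"
  show "finite F" unfolding F_def by simp
  show "F \<subseteq> S" unfolding F_def using subgroup_int_pow_closed[OF S t] by blast
  show "S \<subseteq> P <#> F"
  proof
    fix x assume x: "x \<in> S"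
    have xc: "x \<in> carrier G" using x subgroup.mem_carrier[OF S] by blast
    obtain k :: int where k: "x \<otimes> inv (t [^] k) \<in> N" using cyc[OF x] by blast
    define q where "q = k div m"
    define r where "r = k mod m"
    have kqr: "k = m * q + r" unfolding q_def r_def by simp
    have r: "r \<in> {0..<m}" unfolding r_def using m(1) by simp
    have "t [^] k = t [^] (m * q) \<otimes> t [^] r" unfolding kqr using int_pow_mult[OF tc] by simp
    moreover have "t [^] (m * q) = (t [^] m) [^] q" using int_pow_pow[OF tc] by simp
    ultimately have tk: "t [^] k = (t [^] m) [^] q \<otimes> t [^] r" by simp
    have p1: "x \<otimes> inv (t [^] k) \<in> P" using k NP by blast
    have p2: "(t [^] m) [^] q \<in> P" using subgroup_int_pow_closed[OF P(1) m(2)] .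
    have "x = (x \<otimes> inv (t [^] k)) \<otimes> ((t [^] m) [^] q \<otimes> t [^] r)"
      unfolding tk[symmetric] using xc tc by (simp add: m_assoc)
    also have "\<dots> = ((x \<otimes> inv (t [^] k)) \<otimes> (t [^] m) [^] q) \<otimes> t [^] r"
      using xc tc by (simp add: m_assoc)
    finally have "x = ((x \<otimes> inv (t [^] k)) \<otimes> (t [^] m) [^] q) \<otimes> t [^] r" .
    moreover have "(x \<otimes> inv (t [^] k)) \<otimes> (t [^] m) [^] q \<in> P" using subgroup.m_closed[OF P(1) p1 p2] .
    moreover have "t [^] r \<in> F" unfolding F_def using r by blast
    ultimately show "x \<in> P <#> F" using set_multI by metis
  qed
qed

lemma conj_image:
  assumes S: "subgroup S G" and N: "subgroup N G" "N \<subseteq> S" "nrm G S N" and s: "s \<in> S"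
  shows "(\<lambda>x. s \<otimes> x \<otimes> inv s) ` N = N"
proof -
  have sc: "s \<in> carrier G" using s subgroup.mem_carrier[OF S] by blast
  have isS: "inv s \<in> S" using subgroup.m_inv_closed[OF S s] .
  show ?thesis
  proof (rule Set.set_eqI, rule iffI)
    fix y assume "y \<in> (\<lambda>x. s \<otimes> x \<otimes> inv s) ` N"
    then show "y \<in> N" using N(3) s unfolding nrm_def by blast
  next
    fix y assume y: "y \<in> N"
    have yc: "y \<in> carrier G" using y subgroup.mem_carrier[OF N(1)] by blast
    have "inv s \<otimes> y \<otimes> inv (inv s) \<in> N" using N(3) isS y unfolding nrm_def by blast
    moreover have "y = s \<otimes> (inv s \<otimes> y \<otimes> inv (inv s)) \<otimes> inv s" using sc yc by (simp add: m_assoc)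
    ultimately show "y \<in> (\<lambda>x. s \<otimes> x \<otimes> inv s) ` N" by blast
  qed
qed

lemma conj_sub:
  assumes S: "subgroup S G" and N: "subgroup N G" "N \<subseteq> S" "nrm G S N" and s: "s \<in> S"
    and V: "subgroup V G" "V \<subseteq> N" "fi G N V"
  defines "C \<equiv> {x \<in> N. s \<otimes> x \<otimes> inv s \<in> V}"
  shows "subgroup C G" "C \<subseteq> N" "fi G N C" "card ((\<lambda>x. C #> x) ` N) = card ((\<lambda>x. V #> x) ` N)"
proof -
  have sc: "s \<in> carrier G" using s subgroup.mem_carrier[OF S] by blast
  have Nc: "\<And>x. x \<in> N \<Longrightarrow> x \<in> carrier G" using subgroup.mem_carrier[OF N(1)] by blast
  show CN: "C \<subseteq> N" unfolding C_def by blast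
  show sgC: "subgroup C G"
  proof (rule subgroupI)
    show "C \<subseteq> carrier G" using CN Nc by blast
    have "s \<otimes> \<one> \<otimes> inv s = \<one>" using sc by simp
    then have "\<one> \<in> C" unfolding C_def using subgroup.one_closed[OF N(1)] subgroup.one_closed[OF V(1)] by simp
    then show "C \<noteq> {}" by blast
  next
    fix a assume a: "a \<in> C"
    then have aN: "a \<in> N" and av: "s \<otimes> a \<otimes> inv s \<in> V" unfolding C_def by auto
    have "inv (s \<otimes> a \<otimes> inv s) \<in> V" by (rule subgroup.m_inv_closed[OF V(1) av])
    then have "s \<otimes> inv a \<otimes> inv s \<in> V" using conj_inv[OF sc Nc[OF aN]] by simp
    moreover have "inv a \<in> N" by (rule subgroup.m_inv_closed[OF N(1) aN])
    ultimately show "inv a \<in> C" unfolding C_def by blast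
  next
    fix a b assume a: "a \<in> C" and b: "b \<in> C"
    then have aN: "a \<in> N" and av: "s \<otimes> a \<otimes> inv s \<in> V" and bN: "b \<in> N" and bv: "s \<otimes> b \<otimes> inv s \<in> V"
      unfolding C_def by auto
    have "(s \<otimes> a \<otimes> inv s) \<otimes> (s \<otimes> b \<otimes> inv s) \<in> V" by (rule subgroup.m_closed[OF V(1) av bv])
    then have "s \<otimes> (a \<otimes> b) \<otimes> inv s \<in> V" using conj_mult[OF sc Nc[OF aN] Nc[OF bN]] by simp
    moreover have "a \<otimes> b \<in> N" by (rule subgroup.m_closed[OF N(1) aN bN])
    ultimately show "a \<otimes> b \<in> C" unfolding C_def by blast
  qed
  have key: "C #> x = C #> y \<longleftrightarrow> V #> (s \<otimes> x \<otimes> inv s) = V #> (s \<otimes> y \<otimes> inv s)"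
    if x: "x \<in> N" and y: "y \<in> N" for x y
  proof -
    have xc: "x \<in> carrier G" and yc: "y \<in> carrier G" using x y Nc by auto
    have "C #> x = C #> y \<longleftrightarrow> x \<otimes> inv y \<in> C" using coset_eq_iff[OF sgC xc yc] .
    also have "\<dots> \<longleftrightarrow> s \<otimes> (x \<otimes> inv y) \<otimes> inv s \<in> V"
      unfolding C_def using subgroup.m_closed[OF N(1) x subgroup.m_inv_closed[OF N(1) y]] by simp
    also have "s \<otimes> (x \<otimes> inv y) \<otimes> inv s = (s \<otimes> x \<otimes> inv s) \<otimes> inv (s \<otimes> y \<otimes> inv s)"
      using sc xc yc by (simp add: m_assoc inv_mult_group)
    also have "(\<dots> \<in> V) \<longleftrightarrow> V #> (s \<otimes> x \<otimes> inv s) = V #> (s \<otimes> y \<otimes> inv s)"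
      using coset_eq_iff[OF V(1)] sc xc yc by simp
    finally show ?thesis .
  qed
  have img: "(\<lambda>x. V #> (s \<otimes> x \<otimes> inv s)) ` N = (\<lambda>x. V #> x) ` N"
  proof -
    have "(\<lambda>x. V #> (s \<otimes> x \<otimes> inv s)) ` N = (\<lambda>x. V #> x) ` ((\<lambda>x. s \<otimes> x \<otimes> inv s) ` N)"
      by (simp add: image_image)
    then show ?thesis using conj_image[OF S N s] by simp
  qed
  have finV: "finite ((\<lambda>x. V #> x) ` N)" using fi_cosets[OF V(1) N(1) V(2)] V(3) by simp
  have "finite ((\<lambda>x. C #> x) ` N)"
    by (rule finite_factor[where g = "\<lambda>x. V #> (s \<otimes> x \<otimes> inv s)"]) (use finV img key in auto)
  then show "fi G N C" using fi_cosets[OF sgC N(1) CN] by simp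
  have "card ((\<lambda>x. C #> x) ` N) = card ((\<lambda>x. V #> (s \<otimes> x \<otimes> inv s)) ` N)"
    by (rule card_factor) (use key in auto)
  then show "card ((\<lambda>x. C #> x) ` N) = card ((\<lambda>x. V #> x) ` N)" using img by simp
qed

end

context group
begin

lemma fg_core:
  assumes S: "subgroup S G" and N: "subgroup N G" "N \<subseteq> S" "nrm G S N"
    and Yf: "finite Y" and Y: "Y \<subseteq> carrier G" and NY: "N = generate G Y"
    and V: "subgroup V G" "V \<subseteq> N" "fi G N V"
  shows "fi G N (core G S V)"
proof -
  define k where "k = card ((\<lambda>x. V #> x) ` N)"
  define F where "F = (\<lambda>s. {x \<in> N. s \<otimes> x \<otimes> inv s \<in> V}) ` S"
  define Fam where "Fam = {W. subgroup W G \<and> W \<subseteq> generate G Y \<and> finite ((\<lambda>x. W #> x) ` generate G Y)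
            \<and> card ((\<lambda>x. W #> x) ` generate G Y) = k}"
  have finFam: "finite Fam" unfolding Fam_def by (rule fg_finite_subgroups[OF Yf Y])
  have Fprops: "subgroup C G \<and> C \<subseteq> N \<and> fi G N C" if C: "C \<in> F" for C
  proof -
    obtain s where s: "s \<in> S" "C = {x \<in> N. s \<otimes> x \<otimes> inv s \<in> V}" using C unfolding F_def by blast
    show ?thesis unfolding s(2) using conj_sub[OF S N s(1) V] by blast
  qed
  have "F \<subseteq> Fam"
  proof
    fix C assume C: "C \<in> F"
    obtain s where s: "s \<in> S" "C = {x \<in> N. s \<otimes> x \<otimes> inv s \<in> V}" using C unfolding F_def by blast
    have p: "subgroup C G" "C \<subseteq> N" "fi G N C" "card ((\<lambda>x. C #> x) ` N) = k"
      unfolding s(2) k_def using conj_sub[OF S N s(1) V] by auto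
    have "finite ((\<lambda>x. C #> x) ` N)" using fi_cosets[OF p(1) N(1) p(2)] p(3) by simp
    then show "C \<in> Fam" unfolding Fam_def using p NY by simp
  qed
  then have finF: "finite F" using finFam finite_subset by blast
  have fiI: "fi G N (N \<inter> \<Inter>F)" using fi_Inter[OF finF N(1)] Fprops by blast
  have eq: "N \<inter> \<Inter>F = core G S V"
  proof (rule Set.set_eqI, rule iffI)
    fix x assume x: "x \<in> N \<inter> \<Inter>F"
    have "x \<in> S" using x N(2) by blast
    moreover have "\<forall>s\<in>S. s \<otimes> x \<otimes> inv s \<in> V"
    proof
      fix s assume "s \<in> S"
      then have "{x \<in> N. s \<otimes> x \<otimes> inv s \<in> V} \<in> F" unfolding F_def by blast
      then show "s \<otimes> x \<otimes> inv s \<in> V" using x by blast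
    qed
    ultimately show "x \<in> core G S V" unfolding core_mem by blast
  next
    fix x assume x: "x \<in> core G S V"
    have VS: "V \<subseteq> S" using V(2) N(2) by blast
    have "x \<in> V" using x core_props(2)[OF S V(1) VS] by blast
    then have xN: "x \<in> N" using V(2) by blast
    have "x \<in> C" if C: "C \<in> F" for C
    proof -
      obtain s where s: "s \<in> S" "C = {x \<in> N. s \<otimes> x \<otimes> inv s \<in> V}" using C unfolding F_def by blast
      have "s \<otimes> x \<otimes> inv s \<in> V" using x s(1) unfolding core_mem by blast
      then show "x \<in> C" unfolding s(2) using xN by blast
    qed
    then show "x \<in> N \<inter> \<Inter>F" using xN by blast
  qed
  show ?thesis using fiI unfolding eq .
qed

lemma key_sep:
  assumes H: "subgroup H G" and N: "subgroup N G" and V: "subgroup V G"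
    and WV: "W \<subseteq> V" and WN: "W \<subseteq> N" and HNV: "H \<inter> N \<subseteq> V"
    and n: "n \<in> N" "n \<notin> V" and h: "h \<in> H"
  shows "n \<otimes> h \<notin> W <#> H"
proof
  assume "n \<otimes> h \<in> W <#> H"
  then obtain w h' where wh: "w \<in> W" "h' \<in> H" "n \<otimes> h = w \<otimes> h'" using set_mult_mem by blast
  have nc: "n \<in> carrier G" using n subgroup.mem_carrier[OF N] by blast
  have hc: "h \<in> carrier G" "h' \<in> carrier G" using h wh subgroup.mem_carrier[OF H] by auto
  have wc: "w \<in> carrier G" using wh WN subgroup.mem_carrier[OF N] by blast
  have "n = (n \<otimes> h) \<otimes> inv h" using nc hc by (simp add: m_assoc)
  also have "\<dots> = w \<otimes> (h' \<otimes> inv h)" unfolding wh(3) using wc hc by (simp add: m_assoc)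
  finally have ne: "n = w \<otimes> (h' \<otimes> inv h)" .
  have eH: "h' \<otimes> inv h \<in> H" using subgroup.m_closed[OF H wh(2) subgroup.m_inv_closed[OF H h]] .
  have "inv w \<otimes> n = h' \<otimes> inv h" unfolding ne using wc hc by simp
  moreover have "inv w \<otimes> n \<in> N"
    using subgroup.m_closed[OF N subgroup.m_inv_closed[OF N] n(1)] wh(1) WN by blast
  ultimately have "h' \<otimes> inv h \<in> V" using eH HNV by auto
  moreover have "w \<in> V" using wh(1) WV by blast
  ultimately have "w \<otimes> (h' \<otimes> inv h) \<in> V" using subgroup.m_closed[OF V] by blast
  then show False using ne n(2) by simp
qed

lemma FI_step:
  assumes S: "subgroup S G" and N: "subgroup N G" "N \<subseteq> S" "nrm G S N" "fi G S N" "lerf G N"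
  shows "lerf G S"
  unfolding lerf_def
proof (intro allI impI)
  fix H g assume H: "subgroup H G" "H \<subseteq> S" and g: "g \<in> S" "g \<notin> H"
  have Hc: "H \<subseteq> carrier G" using subgroup.subset[OF H(1)] .
  have nHN: "nrm G H N" using nrm_mono[OF N(3) H(2)] .
  have NH: "subgroup (N <#> H) G" using nrm_prod_subgroup[OF N(1) H(1) nHN] .
  have HNH: "H \<subseteq> N <#> H" using subgroup_in_prod2[OF N(1) Hc] .
  have NHS: "N <#> H \<subseteq> S" using prod_in_subgroup[OF S N(2) H(2)] .
  show "\<exists>U. subgroup U G \<and> H \<subseteq> U \<and> U \<subseteq> S \<and> fi G S U \<and> g \<notin> U"
  proof (cases "g \<in> N <#> H")
    case False
    have "fi G S (N <#> H)" using fi_mono[OF subgroup_in_prod1[OF H(1) subgroup.subset[OF N(1)]] N(4)] .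
    then show ?thesis using NH HNH NHS False by blast
  next
    case True
    then obtain n h where nh: "n \<in> N" "h \<in> H" "g = n \<otimes> h" using set_mult_mem by blast
    have "n \<notin> H"
    proof
      assume "n \<in> H"
      then have "n \<otimes> h \<in> H" using subgroup.m_closed[OF H(1) _ nh(2)] by blast
      then show False using g(2) nh(3) by simp
    qed
    have HN: "subgroup (H \<inter> N) G" using subgroups_Inter_pair[OF H(1) N(1)] .
    obtain V where V: "subgroup V G" "H \<inter> N \<subseteq> V" "V \<subseteq> N" "fi G N V" "n \<notin> V"
      using N(5) HN nh(1) \<open>n \<notin> H\<close> unfolding lerf_def by (metis Int_iff inf_le2)
    have VS: "V \<subseteq> S" using V(3) N(2) by blast
    have fSV: "fi G S V" using fi_trans[OF S N(1) N(2) N(4) V(4) V(1)] .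
    define W where "W = core G S V"
    have W: "subgroup W G" "W \<subseteq> V" "nrm G S W" "W \<subseteq> S" unfolding W_def using core_props[OF S V(1) VS] by auto
    have fW: "fi G S W" unfolding W_def using core_fi[OF S V(1) VS fSV] .
    have nHW: "nrm G H W" using nrm_mono[OF W(3) H(2)] .
    have WH: "subgroup (W <#> H) G" using nrm_prod_subgroup[OF W(1) H(1) nHW] .
    have "H \<subseteq> W <#> H" using subgroup_in_prod2[OF W(1) Hc] .
    moreover have "W <#> H \<subseteq> S" using prod_in_subgroup[OF S W(4) H(2)] .
    moreover have "fi G S (W <#> H)" using fi_mono[OF subgroup_in_prod1[OF H(1) subgroup.subset[OF W(1)]] fW] .
    moreover have "g \<notin> W <#> H"
      unfolding nh(3) using key_sep[OF H(1) N(1) V(1) W(2) _ V(2) nh(1) V(5) nh(2)] W(2) V(3) by blast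
    ultimately show ?thesis using WH by blast
  qed
qed

end

context group
begin

lemma gen_pow_mem:
  assumes tc: "t \<in> carrier G" and x: "x \<in> generate G {t [^] (q::int)}"
  shows "\<exists>a::int. x = t [^] (q * a)"
proof -
  have "x \<in> {(t [^] q) [^] (k::int) | k. k \<in> UNIV}" using x generate_pow[OF int_pow_closed[OF tc]] by simp
  then obtain a :: int where "x = (t [^] q) [^] a" by blast
  then show ?thesis using int_pow_pow[OF tc] by auto
qed

lemma gen_pow_sub:
  assumes S: "subgroup S G" and t: "t \<in> S"
  shows "subgroup (generate G {t [^] (q::int)}) G" "generate G {t [^] q} \<subseteq> S" "t [^] q \<in> generate G {t [^] q}"
proof -
  have tc: "t \<in> carrier G" using t subgroup.mem_carrier[OF S] by blast
  show "subgroup (generate G {t [^] q}) G" using generate_is_subgroup[of "{t [^] q}"] tc by simp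
  show "generate G {t [^] q} \<subseteq> S" using generate_subgroup_incl[OF _ S] subgroup_int_pow_closed[OF S t] by simp
  show "t [^] q \<in> generate G {t [^] q}" by (rule generate.incl) simp
qed

lemma T_props:
  assumes S: "subgroup S G" and N: "subgroup N G" "N \<subseteq> S" "nrm G S N"
    and W: "subgroup W G" "W \<subseteq> N" "nrm G S W" "fi G N W"
  defines "T \<equiv> {s \<in> S. \<forall>n\<in>N. s \<otimes> n \<otimes> inv s \<otimes> inv n \<in> W}"
  shows "subgroup T G" "T \<subseteq> S" "fi G S T"
proof -
  have Sc: "\<And>x. x \<in> S \<Longrightarrow> x \<in> carrier G" using subgroup.mem_carrier[OF S] by blast
  have Nc: "\<And>x. x \<in> N \<Longrightarrow> x \<in> carrier G" using subgroup.mem_carrier[OF N(1)] by blast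
  have conjN: "\<And>s n. s \<in> S \<Longrightarrow> n \<in> N \<Longrightarrow> s \<otimes> n \<otimes> inv s \<in> N" using N(3) unfolding nrm_def by blast
  have conjW: "\<And>s n. s \<in> S \<Longrightarrow> n \<in> W \<Longrightarrow> s \<otimes> n \<otimes> inv s \<in> W" using W(3) unfolding nrm_def by blast
  show TS: "T \<subseteq> S" unfolding T_def by blast
  show sgT: "subgroup T G"
  proof (rule subgroupI)
    show "T \<subseteq> carrier G" using TS Sc by blast
    have "\<forall>n\<in>N. \<one> \<otimes> n \<otimes> inv \<one> \<otimes> inv n \<in> W"
    proof
      fix n assume "n \<in> N"
      then have "\<one> \<otimes> n \<otimes> inv \<one> \<otimes> inv n = \<one>" using Nc by simp
      then show "\<one> \<otimes> n \<otimes> inv \<one> \<otimes> inv n \<in> W" using subgroup.one_closed[OF W(1)] by simp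
    qed
    then have "\<one> \<in> T" unfolding T_def using subgroup.one_closed[OF S] by blast
    then show "T \<noteq> {}" by blast
  next
    fix s assume s: "s \<in> T"
    then have sS: "s \<in> S" and sW: "\<forall>n\<in>N. s \<otimes> n \<otimes> inv s \<otimes> inv n \<in> W" unfolding T_def by auto
    have isS: "inv s \<in> S" using subgroup.m_inv_closed[OF S sS] .
    have "\<forall>n\<in>N. inv s \<otimes> n \<otimes> inv (inv s) \<otimes> inv n \<in> W"
    proof
      fix n assume n: "n \<in> N"
      define m where "m = inv s \<otimes> n \<otimes> inv (inv s)"
      have mN: "m \<in> N" unfolding m_def using conjN[OF isS n] .
      have "s \<otimes> m \<otimes> inv s \<otimes> inv m \<in> W" using sW mN by blast
      moreover have "s \<otimes> m \<otimes> inv s \<otimes> inv m = n \<otimes> inv m"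
        unfolding m_def using Sc[OF sS] Nc[OF n] by (simp add: m_assoc)
      ultimately have "n \<otimes> inv m \<in> W" by simp
      then have "inv (n \<otimes> inv m) \<in> W" by (rule subgroup.m_inv_closed[OF W(1)])
      moreover have "inv (n \<otimes> inv m) = m \<otimes> inv n" using Nc[OF n] Nc[OF mN] by (simp add: inv_mult_group)
      ultimately show "inv s \<otimes> n \<otimes> inv (inv s) \<otimes> inv n \<in> W" unfolding m_def by simp
    qed
    then show "inv s \<in> T" unfolding T_def using isS by blast
  next
    fix s1 s2 assume s1: "s1 \<in> T" and s2: "s2 \<in> T"
    then have sS: "s1 \<in> S" "s2 \<in> S" and sW: "\<forall>n\<in>N. s1 \<otimes> n \<otimes> inv s1 \<otimes> inv n \<in> W" "\<forall>n\<in>N. s2 \<otimes> n \<otimes> inv s2 \<otimes> inv n \<in> W"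
      unfolding T_def by auto
    have "\<forall>n\<in>N. s1 \<otimes> s2 \<otimes> n \<otimes> inv (s1 \<otimes> s2) \<otimes> inv n \<in> W"
    proof
      fix n assume n: "n \<in> N"
      have a: "s1 \<otimes> (s2 \<otimes> n \<otimes> inv s2 \<otimes> inv n) \<otimes> inv s1 \<in> W" using conjW[OF sS(1)] sW(2) n by blast
      have b: "s1 \<otimes> n \<otimes> inv s1 \<otimes> inv n \<in> W" using sW(1) n by blast
      have "(s1 \<otimes> (s2 \<otimes> n \<otimes> inv s2 \<otimes> inv n) \<otimes> inv s1) \<otimes> (s1 \<otimes> n \<otimes> inv s1 \<otimes> inv n) \<in> W"
        by (rule subgroup.m_closed[OF W(1) a b])
      moreover have "(s1 \<otimes> (s2 \<otimes> n \<otimes> inv s2 \<otimes> inv n) \<otimes> inv s1) \<otimes> (s1 \<otimes> n \<otimes> inv s1 \<otimes> inv n)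
          = s1 \<otimes> s2 \<otimes> n \<otimes> inv (s1 \<otimes> s2) \<otimes> inv n"
        using Sc[OF sS(1)] Sc[OF sS(2)] Nc[OF n] by (simp add: m_assoc inv_mult_group)
      ultimately show "s1 \<otimes> s2 \<otimes> n \<otimes> inv (s1 \<otimes> s2) \<otimes> inv n \<in> W" by simp
    qed
    then show "s1 \<otimes> s2 \<in> T" unfolding T_def using subgroup.m_closed[OF S sS] by blast
  qed
  obtain R where R: "finite R" "R \<subseteq> N" "N \<subseteq> W <#> R" using W(4) unfolding fi_def by blast
  define Cos where "Cos = (\<lambda>x. W #> x) ` N"
  have finC: "finite Cos" unfolding Cos_def using fi_cosets[OF W(1) N(1) W(2)] W(4) by simp
  show "fi G S T"
  proof (rule fi_factor[where g = "\<lambda>s. (\<lambda>r\<in>R. W #> (s \<otimes> r \<otimes> inv s))"])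
    show "subgroup T G" "subgroup S G" "T \<subseteq> S" by fact+
    have "(\<lambda>s. (\<lambda>r\<in>R. W #> (s \<otimes> r \<otimes> inv s))) ` S \<subseteq> R \<rightarrow>\<^sub>E Cos"
    proof
      fix f assume "f \<in> (\<lambda>s. (\<lambda>r\<in>R. W #> (s \<otimes> r \<otimes> inv s))) ` S"
      then obtain s where s: "s \<in> S" "f = (\<lambda>r\<in>R. W #> (s \<otimes> r \<otimes> inv s))" by blast
      have "\<And>r. r \<in> R \<Longrightarrow> W #> (s \<otimes> r \<otimes> inv s) \<in> Cos" unfolding Cos_def using conjN[OF s(1)] R(2) by blast
      then show "f \<in> R \<rightarrow>\<^sub>E Cos" unfolding s(2) by simp
    qed
    moreover have "finite (R \<rightarrow>\<^sub>E Cos)" using R(1) finC by (simp add: finite_PiE)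
    ultimately show "finite ((\<lambda>s. (\<lambda>r\<in>R. W #> (s \<otimes> r \<otimes> inv s))) ` S)" using finite_subset by blast
  next
    fix s s' assume s: "s \<in> S" and s': "s' \<in> S"
      and eq: "(\<lambda>r\<in>R. W #> (s \<otimes> r \<otimes> inv s)) = (\<lambda>r\<in>R. W #> (s' \<otimes> r \<otimes> inv s'))"
    have sc: "s \<in> carrier G" "s' \<in> carrier G" using s s' Sc by auto
    have eqr: "W #> (s \<otimes> r \<otimes> inv s) = W #> (s' \<otimes> r \<otimes> inv s')" if r: "r \<in> R" for r
    proof -
      have "(\<lambda>r\<in>R. W #> (s \<otimes> r \<otimes> inv s)) r = (\<lambda>r\<in>R. W #> (s' \<otimes> r \<otimes> inv s')) r" using eq by simp
      then show ?thesis using r by simp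
    qed
    have cosred: "W #> (x \<otimes> (w \<otimes> r) \<otimes> inv x) = W #> (x \<otimes> r \<otimes> inv x)"
      if x: "x \<in> S" and w: "w \<in> W" and r: "r \<in> N" for x w r
    proof -
      have xc: "x \<in> carrier G" using x Sc by blast
      have wc: "w \<in> carrier G" using w W(2) Nc by blast
      have rc: "r \<in> carrier G" using r Nc by blast
      have "(x \<otimes> (w \<otimes> r) \<otimes> inv x) \<otimes> inv (x \<otimes> r \<otimes> inv x) = x \<otimes> w \<otimes> inv x"
        using xc wc rc by (simp add: m_assoc inv_mult_group)
      moreover have "x \<otimes> w \<otimes> inv x \<in> W" using conjW[OF x w] .
      ultimately show ?thesis using coset_eq_iff[OF W(1)] xc wc rc by simp
    qed
    have "s \<otimes> inv s' \<in> S" using subgroup.m_closed[OF S s subgroup.m_inv_closed[OF S s']] .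
    moreover have "\<forall>n\<in>N. (s \<otimes> inv s') \<otimes> n \<otimes> inv (s \<otimes> inv s') \<otimes> inv n \<in> W"
    proof
      fix n assume n: "n \<in> N"
      have nc: "n \<in> carrier G" using n Nc by blast
      define m where "m = inv s' \<otimes> n \<otimes> inv (inv s')"
      have mN: "m \<in> N" unfolding m_def using conjN[OF subgroup.m_inv_closed[OF S s'] n] .
      then obtain w r where wr: "w \<in> W" "r \<in> R" "m = w \<otimes> r" using R(3) set_mult_mem by blast
      have rN: "r \<in> N" using wr(2) R(2) by blast
      have "W #> (s \<otimes> m \<otimes> inv s) = W #> (s \<otimes> r \<otimes> inv s)" unfolding wr(3) using cosred[OF s wr(1) rN] .
      also have "\<dots> = W #> (s' \<otimes> r \<otimes> inv s')" using eqr[OF wr(2)] .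
      also have "\<dots> = W #> (s' \<otimes> m \<otimes> inv s')" unfolding wr(3) using cosred[OF s' wr(1) rN] by simp
      also have "s' \<otimes> m \<otimes> inv s' = n" unfolding m_def using sc nc by (simp add: m_assoc)
      finally have "W #> (s \<otimes> m \<otimes> inv s) = W #> n" .
      then have "(s \<otimes> m \<otimes> inv s) \<otimes> inv n \<in> W"
        using coset_eq_iff[OF W(1)] sc nc mN Nc by (meson m_closed inv_closed)
      moreover have "(s \<otimes> m \<otimes> inv s) \<otimes> inv n = (s \<otimes> inv s') \<otimes> n \<otimes> inv (s \<otimes> inv s') \<otimes> inv n"
        unfolding m_def using sc nc by (simp add: m_assoc inv_mult_group)
      ultimately show "(s \<otimes> inv s') \<otimes> n \<otimes> inv (s \<otimes> inv s') \<otimes> inv n \<in> W" by simp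
    qed
    ultimately show "s \<otimes> inv s' \<in> T" unfolding T_def by blast
  qed
qed

lemma pow_in_fi:
  assumes S: "subgroup S G" and T: "subgroup T G" "T \<subseteq> S" "fi G S T" and t: "t \<in> S"
  shows "\<exists>r::int. r > 0 \<and> t [^] r \<in> T"
proof -
  have tc: "t \<in> carrier G" using t subgroup.mem_carrier[OF S] by blast
  define f where "f = (\<lambda>i::nat. T #> t [^] (int i))"
  have "range f \<subseteq> (\<lambda>x. T #> x) ` S" unfolding f_def using subgroup_int_pow_closed[OF S t] by blast
  moreover have "finite ((\<lambda>x. T #> x) ` S)" using fi_cosets[OF T(1) S T(2)] T(3) by simp
  ultimately have "finite (range f)" using finite_subset by blast
  then have "\<not> inj f" using finite_imageD infinite_UNIV_nat by blast
  then obtain i j where ij: "i \<noteq> j" "f i = f j" unfolding inj_def by blast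
  have "t [^] (int i) \<otimes> inv (t [^] (int j)) \<in> T" using ij(2) coset_eq_iff[OF T(1)] tc unfolding f_def by simp
  then have tij: "t [^] (int i - int j) \<in> T" using int_pow_diff[OF tc] by simp
  show ?thesis
  proof (cases "int i > int j")
    case True then show ?thesis using tij by (intro exI[of _ "int i - int j"]) simp
  next
    case False
    then have gt: "int j - int i > 0" using ij(1) by simp
    have "inv (t [^] (int i - int j)) \<in> T" using subgroup.m_inv_closed[OF T(1) tij] .
    moreover have "inv (t [^] (int i - int j)) = t [^] (int j - int i)"
      using int_pow_neg[OF tc, of "int i - int j"] by simp
    ultimately have "t [^] (int j - int i) \<in> T" by simp
    then show ?thesis using gt by (intro exI[of _ "int j - int i"]) simp
  qed
qed

end

context group
begin

lemma inf_step:
  assumes S: "subgroup S G" and N: "subgroup N G" "N \<subseteq> S" "nrm G S N"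
    and t: "t \<in> S" and cyc: "\<And>x. x \<in> S \<Longrightarrow> \<exists>k::int. x \<otimes> inv (t [^] k) \<in> N"
    and inf: "\<And>k::int. t [^] k \<in> N \<Longrightarrow> k = 0"
    and Yf: "finite Y" and Y: "Y \<subseteq> carrier G" and NY: "N = generate G Y"
    and lerfN: "lerf G N"
  shows "lerf G S"
  unfolding lerf_def
proof (intro allI impI)
  fix H g assume H: "subgroup H G" "H \<subseteq> S" and g: "g \<in> S" "g \<notin> H"
  have tc: "t \<in> carrier G" using t subgroup.mem_carrier[OF S] by blast
  have Sc: "\<And>x. x \<in> S \<Longrightarrow> x \<in> carrier G" using subgroup.mem_carrier[OF S] by blast
  have Nc: "\<And>x. x \<in> N \<Longrightarrow> x \<in> carrier G" using subgroup.mem_carrier[OF N(1)] by blast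
  have Hc: "H \<subseteq> carrier G" using subgroup.subset[OF H(1)] .
  have Ncar: "N \<subseteq> carrier G" using subgroup.subset[OF N(1)] .
  have nHN: "nrm G H N" using nrm_mono[OF N(3) H(2)] .
  have NH: "subgroup (N <#> H) G" using nrm_prod_subgroup[OF N(1) H(1) nHN] .
  have HNH: "H \<subseteq> N <#> H" using subgroup_in_prod2[OF N(1) Hc] .
  have NNH: "N \<subseteq> N <#> H" using subgroup_in_prod1[OF H(1) Ncar] .
  have NHS: "N <#> H \<subseteq> S" using prod_in_subgroup[OF S N(2) H(2)] .
  have A: "fi G S (N <#> H)" if h0: "h0 \<in> H" "h0 \<notin> N" for h0
  proof -
    have h0S: "h0 \<in> S" using h0 H(2) by blast
    obtain m :: int where m: "h0 \<otimes> inv (t [^] m) \<in> N" using cyc[OF h0S] by blast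
    have "m \<noteq> 0"
    proof
      assume "m = 0"
      then have "h0 \<in> N" using m Sc[OF h0S] by simp
      then show False using h0(2) by simp
    qed
    have "inv (h0 \<otimes> inv (t [^] m)) \<otimes> h0 = t [^] m" using Sc[OF h0S] tc by (simp add: inv_mult_group m_assoc)
    moreover have "inv (h0 \<otimes> inv (t [^] m)) \<otimes> h0 \<in> N <#> H"
      using set_multI[OF subgroup.m_inv_closed[OF N(1) m] h0(1)] .
    ultimately have tm: "t [^] m \<in> N <#> H" by simp
    have "t [^] \<bar>m\<bar> \<in> N <#> H"
    proof (cases "m > 0")
      case True then show ?thesis using tm by simp
    next
      case False
      have "inv (t [^] m) \<in> N <#> H" using subgroup.m_inv_closed[OF NH tm] .
      moreover have "inv (t [^] m) = t [^] (- m)" using int_pow_neg[OF tc, of m] by simp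
      ultimately show ?thesis using False by simp
    qed
    moreover have "\<bar>m\<bar> > 0" using \<open>m \<noteq> 0\<close> by simp
    ultimately show ?thesis using cyc_fi[OF S NH NHS NNH t cyc] by blast
  qed
  show "\<exists>U. subgroup U G \<and> H \<subseteq> U \<and> U \<subseteq> S \<and> fi G S U \<and> g \<notin> U"
  proof (cases "g \<in> N <#> H")
    case False
    show ?thesis
    proof (cases "\<exists>h0\<in>H. h0 \<notin> N")
      case True
      then obtain h0 where "h0 \<in> H" "h0 \<notin> N" by blast
      then show ?thesis using A NH HNH NHS False by blast
    next
      case HN: False
      then have HsN: "H \<subseteq> N" by blast
      have gN: "g \<notin> N" using False NNH by blast
      obtain j :: int where j: "g \<otimes> inv (t [^] j) \<in> N" using cyc[OF g(1)] by blast
      have "j \<noteq> 0"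
      proof
        assume "j = 0" then have "g \<in> N" using j Sc[OF g(1)] by simp
        then show False using gN by simp
      qed
      define q where "q = \<bar>j\<bar> + 1"
      have q: "q > 0" unfolding q_def by simp
      define Q where "Q = generate G {t [^] q}"
      have Q: "subgroup Q G" "Q \<subseteq> S" "t [^] q \<in> Q" unfolding Q_def using gen_pow_sub[OF S t] by auto
      have nQN: "nrm G Q N" using nrm_mono[OF N(3) Q(2)] .
      have U: "subgroup (N <#> Q) G" using nrm_prod_subgroup[OF N(1) Q(1) nQN] .
      have NU: "N \<subseteq> N <#> Q" using subgroup_in_prod1[OF Q(1) Ncar] .
      have US: "N <#> Q \<subseteq> S" using prod_in_subgroup[OF S N(2) Q(2)] .
      have tqU: "t [^] q \<in> N <#> Q" using subgroup_in_prod2[OF N(1) subgroup.subset[OF Q(1)]] Q(3) by blast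
      have fU: "fi G S (N <#> Q)" using cyc_fi[OF S U US NU t cyc q tqU] .
      have "g \<notin> N <#> Q"
      proof
        assume "g \<in> N <#> Q"
        then obtain n x where nx: "n \<in> N" "x \<in> Q" "g = n \<otimes> x" using set_mult_mem by blast
        obtain a :: int where a: "x = t [^] (q * a)" using gen_pow_mem[OF tc] nx(2) unfolding Q_def by blast
        have xc: "x \<in> carrier G" using nx(2) subgroup.mem_carrier[OF Q(1)] by blast
        have "g \<otimes> inv x = n" unfolding nx(3) using Nc[OF nx(1)] xc by (simp add: m_assoc)
        then have gx: "g \<otimes> inv x \<in> N" using nx(1) by simp
        have "inv (g \<otimes> inv (t [^] j)) \<otimes> (g \<otimes> inv x) \<in> N"
          using subgroup.m_closed[OF N(1) subgroup.m_inv_closed[OF N(1) j] gx] .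
        moreover have "inv (g \<otimes> inv (t [^] j)) \<otimes> (g \<otimes> inv x) = t [^] j \<otimes> inv x"
          using Sc[OF g(1)] tc xc by (simp add: inv_mult_group m_assoc)
        moreover have "t [^] j \<otimes> inv x = t [^] (j - q * a)" unfolding a using int_pow_diff[OF tc] by simp
        ultimately have "t [^] (j - q * a) \<in> N" by simp
        then have "j = q * a" using inf by fastforce
        then have "\<bar>j\<bar> = q * \<bar>a\<bar>" using q by (simp add: abs_mult)
        moreover have "a \<noteq> 0" using \<open>j = q * a\<close> \<open>j \<noteq> 0\<close> by auto
        ultimately have "\<bar>j\<bar> \<ge> q" using q by (simp add: mult_le_cancel_left1)
        then show False unfolding q_def by simp
      qed
      moreover have "H \<subseteq> N <#> Q" using HsN NU by blast
      ultimately show ?thesis using U US fU by blast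
    qed
  next
    case True
    then obtain n h where nh: "n \<in> N" "h \<in> H" "g = n \<otimes> h" using set_mult_mem by blast
    have "n \<notin> H"
    proof
      assume "n \<in> H"
      then have "n \<otimes> h \<in> H" using subgroup.m_closed[OF H(1) _ nh(2)] by blast
      then show False using g(2) nh(3) by simp
    qed
    have HN: "subgroup (H \<inter> N) G" using subgroups_Inter_pair[OF H(1) N(1)] .
    obtain V where V: "subgroup V G" "H \<inter> N \<subseteq> V" "V \<subseteq> N" "fi G N V" "n \<notin> V"
      using lerfN HN nh(1) \<open>n \<notin> H\<close> unfolding lerf_def by (metis Int_iff inf_le2)
    have VS: "V \<subseteq> S" using V(3) N(2) by blast
    define W where "W = core G S V"
    have W: "subgroup W G" "W \<subseteq> V" "nrm G S W" "W \<subseteq> S" unfolding W_def using core_props[OF S V(1) VS] by auto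
    have WN: "W \<subseteq> N" using W(2) V(3) by blast
    have fW: "fi G N W" unfolding W_def using fg_core[OF S N Yf Y NY V(1,3,4)] .
    obtain R where R: "finite R" "R \<subseteq> N" "N \<subseteq> W <#> R" using fW unfolding fi_def by blast
    have nHW: "nrm G H W" using nrm_mono[OF W(3) H(2)] .
    have WH: "subgroup (W <#> H) G" using nrm_prod_subgroup[OF W(1) H(1) nHW] .
    have HWH: "H \<subseteq> W <#> H" using subgroup_in_prod2[OF W(1) Hc] .
    have gWH: "g \<notin> W <#> H"
      unfolding nh(3) using key_sep[OF H(1) N(1) V(1) W(2) WN V(2) nh(1) V(5) nh(2)] .
    show ?thesis
    proof (cases "\<exists>h0\<in>H. h0 \<notin> N")
      case True
      then obtain h0 where "h0 \<in> H" "h0 \<notin> N" by blast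
      then have fNH: "fi G S (N <#> H)" using A by blast
      have "fi G (N <#> H) (W <#> H)" unfolding fi_def
      proof (intro exI conjI)
        show "finite R" by fact
        show "R \<subseteq> N <#> H" using R(2) NNH by blast
        show "N <#> H \<subseteq> W <#> H <#> R"
        proof
          fix x assume "x \<in> N <#> H"
          then obtain n' h' where nh': "n' \<in> N" "h' \<in> H" "x = n' \<otimes> h'" using set_mult_mem by blast
          have h'c: "h' \<in> carrier G" using nh'(2) Hc by blast
          have ih'S: "inv h' \<in> S" using H(2) nh'(2) subgroup.m_inv_closed[OF H(1)] by blast
          define m where "m = inv h' \<otimes> n' \<otimes> inv (inv h')"
          have mN: "m \<in> N" unfolding m_def using N(3) ih'S nh'(1) unfolding nrm_def by blast
          then obtain w r where wr: "w \<in> W" "r \<in> R" "m = w \<otimes> r" using R(3) set_mult_mem by blast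
          have wc: "w \<in> carrier G" using wr(1) WN Nc by blast
          have rc: "r \<in> carrier G" using wr(2) R(2) Nc by blast
          have "x = h' \<otimes> m" unfolding nh'(3) m_def using h'c Nc[OF nh'(1)] by (simp add: m_assoc)
          also have "\<dots> = (h' \<otimes> w) \<otimes> r" unfolding wr(3) using h'c wc rc by (simp add: m_assoc)
          finally have xe: "x = (h' \<otimes> w) \<otimes> r" .
          have "h' \<otimes> w \<in> H <#> W" using set_multI[OF nh'(2) wr(1)] .
          then have "h' \<otimes> w \<in> W <#> H" using nrm_prod_comm[OF W(1) H(1) nHW] by simp
          then show "x \<in> W <#> H <#> R" unfolding xe using set_multI wr(2) by blast
        qed
      qed
      then have "fi G S (W <#> H)" using fi_trans[OF S NH NHS fNH _ WH] by blast
      moreover have "W <#> H \<subseteq> S" using prod_in_subgroup[OF S W(4) H(2)] .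
      ultimately show ?thesis using WH HWH gWH by blast
    next
      case False
      then have HsN: "H \<subseteq> N" by blast
      define T where "T = {s \<in> S. \<forall>n\<in>N. s \<otimes> n \<otimes> inv s \<otimes> inv n \<in> W}"
      have T: "subgroup T G" "T \<subseteq> S" "fi G S T" unfolding T_def using T_props[OF S N W(1) WN W(3) fW] by auto
      obtain r :: int where r: "r > 0" "t [^] r \<in> T" using pow_in_fi[OF S T t] by blast
      define Q where "Q = generate G {t [^] r}"
      have Q: "subgroup Q G" "Q \<subseteq> S" "t [^] r \<in> Q" unfolding Q_def using gen_pow_sub[OF S t] by auto
      have QT: "Q \<subseteq> T" unfolding Q_def using generate_subgroup_incl[OF _ T(1)] r(2) by simp
      have Qc: "Q \<subseteq> carrier G" using subgroup.subset[OF Q(1)] .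
      have HWN: "W <#> H \<subseteq> N" using prod_in_subgroup[OF N(1) WN HsN] .
      have nQHW: "nrm G Q (W <#> H)" unfolding nrm_def
      proof (intro ballI)
        fix q x assume q: "q \<in> Q" and x: "x \<in> W <#> H"
        then obtain w h' where wh: "w \<in> W" "h' \<in> H" "x = w \<otimes> h'" using set_mult_mem by blast
        have qc: "q \<in> carrier G" using q Qc by blast
        have wc: "w \<in> carrier G" using wh(1) WN Nc by blast
        have hc: "h' \<in> carrier G" using wh(2) Hc by blast
        have qS: "q \<in> S" using q Q(2) by blast
        have w1: "q \<otimes> w \<otimes> inv q \<in> W" using W(3) qS wh(1) unfolding nrm_def by blast
        have w2: "q \<otimes> h' \<otimes> inv q \<otimes> inv h' \<in> W" using q QT wh(2) HsN unfolding T_def by blast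
        have "q \<otimes> x \<otimes> inv q = ((q \<otimes> w \<otimes> inv q) \<otimes> (q \<otimes> h' \<otimes> inv q \<otimes> inv h')) \<otimes> h'"
          unfolding wh(3) using qc wc hc by (simp add: m_assoc)
        moreover have "(q \<otimes> w \<otimes> inv q) \<otimes> (q \<otimes> h' \<otimes> inv q \<otimes> inv h') \<in> W"
          by (rule subgroup.m_closed[OF W(1) w1 w2])
        ultimately show "q \<otimes> x \<otimes> inv q \<in> W <#> H" using set_multI[OF _ wh(2)] by simp
      qed
      have U: "subgroup (W <#> H <#> Q) G" using nrm_prod_subgroup[OF WH Q(1) nQHW] .
      have HU: "H \<subseteq> W <#> H <#> Q"
        using HWH subgroup_in_prod1[OF Q(1) subgroup.subset[OF WH]] by blast
      have US: "W <#> H <#> Q \<subseteq> S" using prod_in_subgroup[OF S _ Q(2)] HWN N(2) by blast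
      have gU: "g \<notin> W <#> H <#> Q"
      proof
        assume "g \<in> W <#> H <#> Q"
        then obtain x q where xq: "x \<in> W <#> H" "q \<in> Q" "g = x \<otimes> q" using set_mult_mem by blast
        have xN: "x \<in> N" using xq(1) HWN by blast
        have qc: "q \<in> carrier G" using xq(2) Qc by blast
        have gN: "g \<in> N" unfolding nh(3) using subgroup.m_closed[OF N(1) nh(1)] nh(2) HsN by blast
        have "inv x \<otimes> g = q" unfolding xq(3) using Nc[OF xN] qc by simp
        moreover have "inv x \<otimes> g \<in> N" using subgroup.m_closed[OF N(1) subgroup.m_inv_closed[OF N(1) xN] gN] .
        ultimately have qN: "q \<in> N" by simp
        obtain a :: int where a: "q = t [^] (r * a)" using gen_pow_mem[OF tc] xq(2) unfolding Q_def by blast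
        then have "r * a = 0" using inf qN by blast
        then have "q = t [^] (0::int)" unfolding a by (simp only:)
        then have "q = \<one>" by simp
        then have "g = x" unfolding xq(3) using Nc[OF xN] by simp
        then show False using xq(1) gWH by simp
      qed
      have nQN: "nrm G Q N" using nrm_mono[OF N(3) Q(2)] .
      have P: "subgroup (N <#> Q) G" using nrm_prod_subgroup[OF N(1) Q(1) nQN] .
      have NP: "N \<subseteq> N <#> Q" using subgroup_in_prod1[OF Q(1) Ncar] .
      have PS: "N <#> Q \<subseteq> S" using prod_in_subgroup[OF S N(2) Q(2)] .
      have trP: "t [^] r \<in> N <#> Q" using subgroup_in_prod2[OF N(1) Qc] Q(3) by blast
      have fP: "fi G S (N <#> Q)" using cyc_fi[OF S P PS NP t cyc r(1) trP] .
      have UP: "W <#> H <#> Q \<subseteq> N <#> Q" using mono_set_mult[OF HWN order_refl] .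
      have "fi G (N <#> Q) (W <#> H <#> Q)" unfolding fi_def
      proof (intro exI conjI)
        show "finite R" by fact
        show "R \<subseteq> N <#> Q" using R(2) NP by blast
        show "N <#> Q \<subseteq> W <#> H <#> Q <#> R"
        proof
          fix y assume "y \<in> N <#> Q"
          then obtain n' q where nq: "n' \<in> N" "q \<in> Q" "y = n' \<otimes> q" using set_mult_mem by blast
          then obtain w \<rho> where wr: "w \<in> W" "\<rho> \<in> R" "n' = w \<otimes> \<rho>" using R(3) set_mult_mem by blast
          have qc: "q \<in> carrier G" using nq(2) Qc by blast
          have wc: "w \<in> carrier G" using wr(1) WN Nc by blast
          have \<rho>N: "\<rho> \<in> N" using wr(2) R(2) by blast
          have \<rho>c: "\<rho> \<in> carrier G" using \<rho>N Nc by blast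
          have iqT: "inv q \<in> T" using QT subgroup.m_inv_closed[OF Q(1) nq(2)] by blast
          define w' where "w' = inv q \<otimes> \<rho> \<otimes> inv (inv q) \<otimes> inv \<rho>"
          have w': "w' \<in> W" unfolding w'_def using iqT \<rho>N unfolding T_def by blast
          have w'c: "w' \<in> carrier G" using w' WN Nc by blast
          define w'' where "w'' = q \<otimes> w' \<otimes> inv q"
          have w'': "w'' \<in> W" unfolding w''_def using W(3) nq(2) Q(2) w' unfolding nrm_def by blast
          have "y = (w \<otimes> w'') \<otimes> q \<otimes> \<rho>"
            unfolding nq(3) wr(3) w''_def w'_def using qc wc \<rho>c by (simp add: m_assoc)
          moreover have "w \<otimes> w'' \<in> W <#> H"
          proof -
            have "(w \<otimes> w'') \<otimes> \<one> \<in> W <#> H"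
              using set_multI[OF subgroup.m_closed[OF W(1) wr(1) w''] subgroup.one_closed[OF H(1)]] .
            moreover have "w'' \<in> carrier G" using w'' WN Nc by blast
            ultimately show ?thesis using wc by simp
          qed
          ultimately show "y \<in> W <#> H <#> Q <#> R" using set_multI[OF set_multI[OF _ nq(2)] wr(2)] by simp
        qed
      qed
      then have "fi G S (W <#> H <#> Q)" using fi_trans[OF S P PS fP _ U] by blast
      then show ?thesis using U HU US gU by blast
    qed
  qed
qed

end

context group
begin

lemma cyc_lerf:
  assumes S: "subgroup S G" and N: "subgroup N G" "N \<subseteq> S" "nrm G S N"
    and t: "t \<in> S" and cyc: "\<And>x. x \<in> S \<Longrightarrow> \<exists>k::int. x \<otimes> inv (t [^] k) \<in> N"
    and Yf: "finite Y" and Y: "Y \<subseteq> carrier G" and NY: "N = generate G Y"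
    and lerfN: "lerf G N"
  shows "lerf G S"
proof (cases "\<exists>k::int. k \<noteq> 0 \<and> t [^] k \<in> N")
  case True
  then obtain k :: int where k: "k \<noteq> 0" "t [^] k \<in> N" by blast
  have tc: "t \<in> carrier G" using t subgroup.mem_carrier[OF S] by blast
  have "t [^] \<bar>k\<bar> \<in> N"
  proof (cases "k > 0")
    case True then show ?thesis using k by simp
  next
    case False
    have "inv (t [^] k) \<in> N" using subgroup.m_inv_closed[OF N(1) k(2)] .
    moreover have "inv (t [^] k) = t [^] (- k)" using int_pow_neg[OF tc, of k] by simp
    ultimately show ?thesis using False by simp
  qed
  moreover have "\<bar>k\<bar> > 0" using k by simp
  ultimately have "fi G S N" using cyc_fi[OF S N(1) N(2) order_refl t cyc] by blast
  then show ?thesis using FI_step[OF S N(1,2,3) _ lerfN] by blast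
next
  case False
  then have "\<And>k::int. t [^] k \<in> N \<Longrightarrow> k = 0" by blast
  then show ?thesis using inf_step[OF S N t cyc _ Yf Y NY lerfN] by blast
qed

lemma lerf_one: "lerf G {\<one>}"
  unfolding lerf_def using subgroup.one_closed by blast

lemma series_lerf:
  assumes Sn: "S n = {\<one>}"
    and step: "\<And>i. i < n \<Longrightarrow> subgroup (S i) G \<and> subgroup (S (Suc i)) G \<and> S (Suc i) \<subseteq> S i \<and>
        nrm G (S i) (S (Suc i)) \<and> (\<exists>g\<in>S i. \<forall>x\<in>S i. \<exists>k::int. x \<otimes> inv (g [^] k) \<in> S (Suc i))"
  shows "d \<le> n \<Longrightarrow> lerf G (S (n - d)) \<and> (\<exists>Y. finite Y \<and> Y \<subseteq> carrier G \<and> S (n - d) = generate G Y)"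
proof (induction d)
  case 0
  have "lerf G (S n)" using Sn lerf_one by simp
  moreover have "S n = generate G {}" using Sn generate_empty by simp
  ultimately show ?case by auto
next
  case (Suc d)
  define i where "i = n - Suc d"
  have i: "i < n" "Suc i = n - d" unfolding i_def using Suc(2) by auto
  obtain Y where Y: "finite Y" "Y \<subseteq> carrier G" "S (Suc i) = generate G Y" and lerfN: "lerf G (S (Suc i))"
    using Suc i by auto
  have st: "subgroup (S i) G" "subgroup (S (Suc i)) G" "S (Suc i) \<subseteq> S i" "nrm G (S i) (S (Suc i))"
    using step[OF i(1)] by auto
  obtain g where g: "g \<in> S i" "\<And>x. x \<in> S i \<Longrightarrow> \<exists>k::int. x \<otimes> inv (g [^] k) \<in> S (Suc i)"
    using step[OF i(1)] by blast
  have gc: "g \<in> carrier G" using g(1) subgroup.mem_carrier[OF st(1)] by blast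
  have lerfS: "lerf G (S i)" using cyc_lerf[OF st(1) st(2) st(3) st(4) g(1) g(2) Y lerfN] .
  have IY: "insert g Y \<subseteq> carrier G" using Y(2) gc by blast
  have "S i = generate G (insert g Y)"
  proof
    show "generate G (insert g Y) \<subseteq> S i"
    proof (rule generate_subgroup_incl[OF _ st(1)])
      have "Y \<subseteq> S (Suc i)" unfolding Y(3) using generate.incl by fast
      then show "insert g Y \<subseteq> S i" using st(3) g(1) by blast
    qed
  next
    show "S i \<subseteq> generate G (insert g Y)"
    proof
      fix x assume x: "x \<in> S i"
      have xc: "x \<in> carrier G" using x subgroup.mem_carrier[OF st(1)] by blast
      obtain k :: int where k: "x \<otimes> inv (g [^] k) \<in> S (Suc i)" using g(2)[OF x] by blast
      have sgI: "subgroup (generate G (insert g Y)) G" using generate_is_subgroup[OF IY] .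
      have "x \<otimes> inv (g [^] k) \<in> generate G (insert g Y)" using k mono_generate[of Y "insert g Y"] Y(3) by blast
      moreover have "g [^] k \<in> generate G (insert g Y)"
        using subgroup_int_pow_closed[OF sgI generate.incl[of g "insert g Y" G]] by simp
      ultimately have "(x \<otimes> inv (g [^] k)) \<otimes> g [^] k \<in> generate G (insert g Y)"
        using subgroup.m_closed[OF sgI] by blast
      then show "x \<in> generate G (insert g Y)" using xc gc by (simp add: m_assoc)
    qed
  qed
  then show ?case using lerfS IY Y(1) i(2) unfolding i_def by (metis finite_insert Suc_diff_Suc Suc.prems Suc_le_lessD)
qed

lemma sub_subgroup:
  assumes P: "subgroup P G" and J: "subgroup J (G\<lparr>carrier := P\<rparr>)"
  shows "subgroup J G"
proof -
  have JP: "J \<subseteq> P" using subgroup.subset[OF J] by simp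
  show ?thesis
  proof (rule subgroupI)
    show "J \<subseteq> carrier G" using JP subgroup.subset[OF P] by blast
    show "J \<noteq> {}" using subgroup.one_closed[OF J] by auto
  next
    fix a assume a: "a \<in> J"
    have "inv\<^bsub>G\<lparr>carrier := P\<rparr>\<^esub> a \<in> J" using subgroup.m_inv_closed[OF J a] .
    then show "inv a \<in> J" using m_inv_consistent[OF P] a JP by auto
  next
    fix a b assume "a \<in> J" "b \<in> J"
    then show "a \<otimes> b \<in> J" using subgroup.m_closed[OF J] by fastforce
  qed
qed

lemma polycyclic_lerf:
  assumes P: "subgroup P G" and pc: "polycyclic (G\<lparr>carrier := P\<rparr>)"
  shows "lerf G P"
proof -
  obtain n S where S0: "S 0 = P" and Sn: "S n = {\<one>}"
    and st: "\<And>i. i < n \<Longrightarrow> subgroup (S i) (G\<lparr>carrier := P\<rparr>) \<and> S (Suc i) \<lhd> (G\<lparr>carrier := S i\<rparr>) \<and>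
        (\<exists>g\<in>S i. \<forall>x\<in>S i. \<exists>k::int. x \<otimes> inv\<^bsub>G\<lparr>carrier := P\<rparr>\<^esub> (g [^]\<^bsub>G\<lparr>carrier := P\<rparr>\<^esub> k) \<in> S (Suc i))"
    using pc unfolding polycyclic_def by auto
  have step: "subgroup (S i) G \<and> subgroup (S (Suc i)) G \<and> S (Suc i) \<subseteq> S i \<and>
        nrm G (S i) (S (Suc i)) \<and> (\<exists>g\<in>S i. \<forall>x\<in>S i. \<exists>k::int. x \<otimes> inv (g [^] k) \<in> S (Suc i))"
    if i: "i < n" for i
  proof -
    have sgP: "subgroup (S i) (G\<lparr>carrier := P\<rparr>)" and nr: "S (Suc i) \<lhd> (G\<lparr>carrier := S i\<rparr>)"
      and cy: "\<exists>g\<in>S i. \<forall>x\<in>S i. \<exists>k::int. x \<otimes> inv\<^bsub>G\<lparr>carrier := P\<rparr>\<^esub> (g [^]\<^bsub>G\<lparr>carrier := P\<rparr>\<^esub> k) \<in> S (Suc i)"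
      using st[OF i] by auto
    have Si: "subgroup (S i) G" using sub_subgroup[OF P sgP] .
    have SiP: "S i \<subseteq> P" using subgroup.subset[OF sgP] by simp
    have sgSi: "subgroup (S (Suc i)) (G\<lparr>carrier := S i\<rparr>)" using normal_imp_subgroup[OF nr] .
    have Ssi: "subgroup (S (Suc i)) G" using sub_subgroup[OF Si sgSi] .
    have sub: "S (Suc i) \<subseteq> S i" using subgroup.subset[OF sgSi] by simp
    have "nrm G (S i) (S (Suc i))" unfolding nrm_def
    proof (intro ballI)
      fix x h assume x: "x \<in> S i" and h: "h \<in> S (Suc i)"
      have "x \<otimes>\<^bsub>G\<lparr>carrier := S i\<rparr>\<^esub> h \<otimes>\<^bsub>G\<lparr>carrier := S i\<rparr>\<^esub> inv\<^bsub>G\<lparr>carrier := S i\<rparr>\<^esub> x \<in> S (Suc i)"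
        using normal.inv_op_closed2[OF nr] x h by simp
      then show "x \<otimes> h \<otimes> inv x \<in> S (Suc i)" using m_inv_consistent[OF Si x] by simp
    qed
    moreover have "\<exists>g\<in>S i. \<forall>x\<in>S i. \<exists>k::int. x \<otimes> inv (g [^] k) \<in> S (Suc i)"
    proof -
      obtain g where g: "g \<in> S i" "\<forall>x\<in>S i. \<exists>k::int. x \<otimes> inv\<^bsub>G\<lparr>carrier := P\<rparr>\<^esub> (g [^]\<^bsub>G\<lparr>carrier := P\<rparr>\<^esub> k) \<in> S (Suc i)"
        using cy by blast
      have gP: "g \<in> P" using g(1) SiP by blast
      have "\<forall>x\<in>S i. \<exists>k::int. x \<otimes> inv (g [^] k) \<in> S (Suc i)"
      proof
        fix x assume "x \<in> S i"
        then obtain k :: int where k: "x \<otimes> inv\<^bsub>G\<lparr>carrier := P\<rparr>\<^esub> (g [^]\<^bsub>G\<lparr>carrier := P\<rparr>\<^esub> k) \<in> S (Suc i)"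
          using g(2) by blast
        have e1: "g [^]\<^bsub>G\<lparr>carrier := P\<rparr>\<^esub> k = g [^] k" using int_pow_consistent[OF P gP] by simp
        have "g [^] k \<in> P" using subgroup_int_pow_closed[OF P gP] .
        then have "inv\<^bsub>G\<lparr>carrier := P\<rparr>\<^esub> (g [^] k) = inv (g [^] k)" using m_inv_consistent[OF P] by blast
        then show "\<exists>k::int. x \<otimes> inv (g [^] k) \<in> S (Suc i)" using k e1 by auto
      qed
      then show ?thesis using g(1) by blast
    qed
    ultimately show ?thesis using Si Ssi sub by blast
  qed
  have "lerf G (S (n - n))" using series_lerf[OF Sn step] by blast
  then show ?thesis using S0 by simp
qed

lemma pbf_lerf:
  assumes "polycyclic_by_finite G"
  shows "lerf G (carrier G)"
proof -
  obtain P where P: "fin_index_normal P G" and pc: "polycyclic (G\<lparr>carrier := P\<rparr>)"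
    using assms unfolding polycyclic_by_finite_def by blast
  have nP: "P \<lhd> G" and finP: "finite (rcosets P)" using P unfolding fin_index_normal_def by auto
  have sgP: "subgroup P G" using normal_imp_subgroup[OF nP] .
  have lP: "lerf G P" using polycyclic_lerf[OF sgP pc] .
  have "rcosets P = (\<lambda>x. P #> x) ` carrier G" unfolding RCOSETS_def by auto
  then have "fi G (carrier G) P" using fi_cosets[OF sgP subgroup_self subgroup.subset[OF sgP]] finP by simp
  moreover have "nrm G (carrier G) P" unfolding nrm_def using normal_invE(2)[OF nP] by blast
  ultimately show ?thesis using FI_step[OF subgroup_self sgP subgroup.subset[OF sgP]] lP by blast
qed

lemma lerf_sep:
  assumes L: "lerf G (carrier G)" and H: "subgroup H G" and g: "g \<in> carrier G" "g \<notin> H"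
  shows "\<exists>M. fin_index_normal M G \<and> g \<notin> H <#> M"
proof -
  obtain U where U: "subgroup U G" "H \<subseteq> U" "fi G (carrier G) U" "g \<notin> U"
    using L H g subgroup.subset[OF H] unfolding lerf_def by blast
  define M where "M = core G (carrier G) U"
  have Uc: "U \<subseteq> carrier G" using subgroup.subset[OF U(1)] .
  have M: "subgroup M G" "M \<subseteq> U" "nrm G (carrier G) M" "M \<subseteq> carrier G"
    unfolding M_def using core_props[OF subgroup_self U(1) Uc] by auto
  have fM: "fi G (carrier G) M" unfolding M_def using core_fi[OF subgroup_self U(1) Uc U(3)] .
  have nM: "M \<lhd> G" using normal_invI[OF M(1)] M(3) unfolding nrm_def by blast
  have "rcosets M = (\<lambda>x. M #> x) ` carrier G" unfolding RCOSETS_def by auto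
  then have "finite (rcosets M)" using fi_cosets[OF M(1) subgroup_self M(4)] fM by simp
  then have "fin_index_normal M G" unfolding fin_index_normal_def using nM by blast
  moreover have "H <#> M \<subseteq> U" using prod_in_subgroup[OF U(1) U(2)] M(2) by blast
  ultimately show ?thesis using U(4) by blast
qed

end

context group
begin

lemma fin_index_normal_iff:
  "fin_index_normal N G \<longleftrightarrow> N \<lhd> G \<and> fi G (carrier G) N"
proof -
  have "rcosets N = (\<lambda>x. N #> x) ` carrier G" unfolding RCOSETS_def by auto
  then show ?thesis unfolding fin_index_normal_def
    using fi_cosets[OF _ subgroup_self] normal_imp_subgroup subgroup.subset by metis
qed

lemma normal_self: "carrier G \<lhd> G"
  by (rule normal_invI[OF subgroup_self]) simp

lemma fin_index_normal_self: "fin_index_normal (carrier G) G"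
  unfolding fin_index_normal_iff using normal_self fi_refl[OF subgroup_self] by blast

lemma fin_index_normal_inter:
  assumes "fin_index_normal M1 G" "fin_index_normal M2 G"
  shows "fin_index_normal (M1 \<inter> M2) G"
proof -
  have n: "M1 \<lhd> G" "M2 \<lhd> G" and f: "fi G (carrier G) M1" "fi G (carrier G) M2"
    using assms unfolding fin_index_normal_iff by auto
  have s: "subgroup M1 G" "subgroup M2 G" using n normal_imp_subgroup by auto
  have "fi G (carrier G) (M1 \<inter> M2)"
    using fi_inter[OF subgroup_self s(1) subgroup.subset[OF s(1)] f(1) s(2) subgroup.subset[OF s(2)] f(2)] .
  then show ?thesis unfolding fin_index_normal_iff using normal_subgroup_intersect[OF n] by blast
qed

lemma fin_index_normal_Inter:
  assumes "finite F" "\<And>M. M \<in> F \<Longrightarrow> fin_index_normal M G"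
  shows "fin_index_normal (carrier G \<inter> \<Inter>F) G"
  using assms
proof (induction F rule: finite_induct)
  case empty then show ?case using fin_index_normal_self by simp
next
  case (insert M F)
  have "carrier G \<inter> \<Inter>(insert M F) = M \<inter> (carrier G \<inter> \<Inter>F)" 
    using insert(4)[of M] normal_imp_subgroup subgroup.subset unfolding fin_index_normal_def by blast
  then show ?case using fin_index_normal_inter insert by simp
qed

lemma normal_prod:
  assumes L: "L \<lhd> G" and M: "M \<lhd> G"
  shows "L <#> M \<lhd> G"
proof -
  have sL: "subgroup L G" and sM: "subgroup M G" using L M normal_imp_subgroup by auto
  have "nrm G M L" unfolding nrm_def using normal_invE(2)[OF L] subgroup.mem_carrier[OF sM] by blast
  then have sLM: "subgroup (L <#> M) G" using nrm_prod_subgroup[OF sL sM] by blast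
  show ?thesis
  proof (rule normal_invI[OF sLM])
    fix x h assume x: "x \<in> carrier G" and h: "h \<in> L <#> M"
    then obtain l m where lm: "l \<in> L" "m \<in> M" "h = l \<otimes> m" using set_mult_mem by blast
    have c: "l \<in> carrier G" "m \<in> carrier G" using subgroup.mem_carrier[OF sL lm(1)] subgroup.mem_carrier[OF sM lm(2)] by auto
    have "x \<otimes> h \<otimes> inv x = (x \<otimes> l \<otimes> inv x) \<otimes> (x \<otimes> m \<otimes> inv x)" unfolding lm(3) using conj_mult[OF x c] .
    moreover have "x \<otimes> l \<otimes> inv x \<in> L" using normal_invE(2)[OF L x lm(1)] .
    moreover have "x \<otimes> m \<otimes> inv x \<in> M" using normal_invE(2)[OF M x lm(2)] .
    ultimately show "x \<otimes> h \<otimes> inv x \<in> L <#> M" using set_multI by metis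
  qed
qed

lemma fin_index_normal_prod:
  assumes L: "L \<lhd> G" and M: "fin_index_normal M G"
  shows "fin_index_normal (L <#> M) G"
proof -
  have nM: "M \<lhd> G" and fM: "fi G (carrier G) M" using M unfolding fin_index_normal_iff by auto
  have "M \<subseteq> L <#> M" using subgroup_in_prod2[OF normal_imp_subgroup[OF L] subgroup.subset[OF normal_imp_subgroup[OF nM]]] .
  then have "fi G (carrier G) (L <#> M)" using fi_mono fM by blast
  then show ?thesis unfolding fin_index_normal_iff using normal_prod[OF L nM] by blast
qed

lemma central_normal:
  assumes L: "subgroup L G" "L \<subseteq> grp_center G"
  shows "L \<lhd> G"
proof (rule normal_invI[OF L(1)])
  fix x h assume x: "x \<in> carrier G" and h: "h \<in> L"
  have hc: "h \<in> carrier G" and comm: "h \<otimes> x = x \<otimes> h" using h L(2) x unfolding grp_center_def by auto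
  have "x \<otimes> h \<otimes> inv x = h" using x hc by (simp add: comm[symmetric] m_assoc)
  then show "x \<otimes> h \<otimes> inv x \<in> L" using h by simp
qed

lemma fi_restrict:
  assumes H: "subgroup H G" and N: "fin_index_normal N G"
  shows "fi G H (H \<inter> N)"
proof -
  have nN: "N \<lhd> G" and fN: "finite (rcosets N)" using N unfolding fin_index_normal_def by auto
  have sN: "subgroup N G" using normal_imp_subgroup[OF nN] .
  show ?thesis
  proof (rule fi_factor[where g = "\<lambda>x. N #> x"])
    show "subgroup (H \<inter> N) G" using subgroups_Inter_pair[OF H sN] .
    show "subgroup H G" "H \<inter> N \<subseteq> H" using H by auto
    have "(\<lambda>x. N #> x) ` H \<subseteq> rcosets N" unfolding RCOSETS_def using subgroup.subset[OF H] by blast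
    then show "finite ((\<lambda>x. N #> x) ` H)" using fN finite_subset by blast
  next
    fix x y assume x: "x \<in> H" and y: "y \<in> H" and e: "N #> x = N #> y"
    have c: "x \<in> carrier G" "y \<in> carrier G" using x y subgroup.mem_carrier[OF H] by auto
    have "x \<otimes> inv y \<in> N" using e coset_eq_iff[OF sN c] by simp
    moreover have "x \<otimes> inv y \<in> H" using subgroup.m_closed[OF H x subgroup.m_inv_closed[OF H y]] .
    ultimately show "x \<otimes> inv y \<in> H \<inter> N" by blast
  qed
qed

lemma preimage_fin_index_normal:
  assumes G2: "group G2" and f: "f \<in> hom G G2" and Q: "fin_index_normal Q G2"
  shows "fin_index_normal {x \<in> carrier G. f x \<in> Q} G"
proof -
  interpret G2: group G2 by fact
  interpret gh: group_hom G G2 f using G2 f by (simp add: group_hom_def group_hom_axioms_def is_group)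
  have nQ: "Q \<lhd> G2" and fQ: "finite (rcosets\<^bsub>G2\<^esub> Q)" using Q unfolding fin_index_normal_def by auto
  have sQ: "subgroup Q G2" using normal_imp_subgroup[OF nQ] .
  define N where "N = {x \<in> carrier G. f x \<in> Q}"
  have sN: "subgroup N G"
  proof (rule subgroupI)
    show "N \<subseteq> carrier G" unfolding N_def by blast
    have "\<one> \<in> N" unfolding N_def using subgroup.one_closed[OF sQ] by simp
    then show "N \<noteq> {}" by blast
  next
    fix a assume "a \<in> N"
    then show "inv a \<in> N" unfolding N_def using subgroup.m_inv_closed[OF sQ] by simp
  next
    fix a b assume "a \<in> N" "b \<in> N"
    then show "a \<otimes> b \<in> N" unfolding N_def using subgroup.m_closed[OF sQ] by simp
  qed
  have nN: "N \<lhd> G"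
  proof (rule normal_invI[OF sN])
    fix x h assume x: "x \<in> carrier G" and h: "h \<in> N"
    have "f (x \<otimes> h \<otimes> inv x) = f x \<otimes>\<^bsub>G2\<^esub> f h \<otimes>\<^bsub>G2\<^esub> inv\<^bsub>G2\<^esub> f x" using x h unfolding N_def by simp
    moreover have "f x \<otimes>\<^bsub>G2\<^esub> f h \<otimes>\<^bsub>G2\<^esub> inv\<^bsub>G2\<^esub> f x \<in> Q"
      using G2.normal_invE(2)[OF nQ] x h unfolding N_def by simp
    moreover have "h \<in> carrier G" using h unfolding N_def by blast
    ultimately show "x \<otimes> h \<otimes> inv x \<in> N" unfolding N_def using x by simp
  qed
  have "fi G (carrier G) N"
  proof (rule fi_factor[where g = "\<lambda>x. Q #>\<^bsub>G2\<^esub> f x"])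
    show "subgroup N G" "subgroup (carrier G) G" "N \<subseteq> carrier G" using sN subgroup_self subgroup.subset by auto
    have "(\<lambda>x. Q #>\<^bsub>G2\<^esub> f x) ` carrier G \<subseteq> rcosets\<^bsub>G2\<^esub> Q" unfolding RCOSETS_def
      using hom_in_carrier[OF f] by blast
    then show "finite ((\<lambda>x. Q #>\<^bsub>G2\<^esub> f x) ` carrier G)" using fQ finite_subset by blast
  next
    fix x y assume x: "x \<in> carrier G" and y: "y \<in> carrier G" and e: "Q #>\<^bsub>G2\<^esub> f x = Q #>\<^bsub>G2\<^esub> f y"
    have "f x \<otimes>\<^bsub>G2\<^esub> inv\<^bsub>G2\<^esub> f y \<in> Q" using e G2.coset_eq_iff[OF sQ] x y by simp
    then show "x \<otimes> inv y \<in> N" unfolding N_def using x y by simp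
  qed
  then show ?thesis unfolding N_def[symmetric] fin_index_normal_iff using nN by blast
qed

end

lemma iso_sub_facts:
  assumes A: "group A" and B: "group B" and H: "subgroup H A" and K: "subgroup K B"
    and phi: "phi \<in> iso (A\<lparr>carrier := H\<rparr>) (B\<lparr>carrier := K\<rparr>)"
  shows "\<And>x y. x \<in> H \<Longrightarrow> y \<in> H \<Longrightarrow> phi (x \<otimes>\<^bsub>A\<^esub> y) = phi x \<otimes>\<^bsub>B\<^esub> phi y"
    and "phi ` H = K" and "inj_on phi H" and "phi \<one>\<^bsub>A\<^esub> = \<one>\<^bsub>B\<^esub>"
    and "\<And>x. x \<in> H \<Longrightarrow> phi (inv\<^bsub>A\<^esub> x) = inv\<^bsub>B\<^esub> (phi x)"
proof -
  interpret A: group A by fact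
  interpret B: group B by fact
  have hom: "phi \<in> hom (A\<lparr>carrier := H\<rparr>) (B\<lparr>carrier := K\<rparr>)" and bij: "bij_betw phi H K"
    using phi unfolding iso_def by auto
  show mult: "\<And>x y. x \<in> H \<Longrightarrow> y \<in> H \<Longrightarrow> phi (x \<otimes>\<^bsub>A\<^esub> y) = phi x \<otimes>\<^bsub>B\<^esub> phi y"
    using hom unfolding hom_def by simp
  show img: "phi ` H = K" using bij unfolding bij_betw_def by simp
  show "inj_on phi H" using bij unfolding bij_betw_def by simp
  have one: "\<one>\<^bsub>A\<^esub> \<in> H" using subgroup.one_closed[OF H] .
  have p1c: "phi \<one>\<^bsub>A\<^esub> \<in> carrier B" using img one subgroup.subset[OF K] by blast
  have "phi \<one>\<^bsub>A\<^esub> = phi \<one>\<^bsub>A\<^esub> \<otimes>\<^bsub>B\<^esub> phi \<one>\<^bsub>A\<^esub>" using mult[OF one one] by simp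
  then show p1: "phi \<one>\<^bsub>A\<^esub> = \<one>\<^bsub>B\<^esub>" using p1c by simp
  fix x assume x: "x \<in> H"
  have ix: "inv\<^bsub>A\<^esub> x \<in> H" using subgroup.m_inv_closed[OF H x] .
  have xc: "x \<in> carrier A" using x subgroup.mem_carrier[OF H] by blast
  have c: "phi x \<in> carrier B" "phi (inv\<^bsub>A\<^esub> x) \<in> carrier B" using img x ix subgroup.subset[OF K] by auto
  have "phi (inv\<^bsub>A\<^esub> x) \<otimes>\<^bsub>B\<^esub> phi x = \<one>\<^bsub>B\<^esub>" using mult[OF ix x] p1 xc by simp
  then show "phi (inv\<^bsub>A\<^esub> x) = inv\<^bsub>B\<^esub> (phi x)" using B.inv_equality c by metis
qed

lemma partner:
  assumes A: "group A" and B: "group B" and H: "subgroup H A" and K: "subgroup K B"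
    and cen: "K \<subseteq> grp_center B"
    and phi: "phi \<in> iso (A\<lparr>carrier := H\<rparr>) (B\<lparr>carrier := K\<rparr>)"
    and SB: "\<And>L b. subgroup L B \<Longrightarrow> L \<subseteq> K \<Longrightarrow> b \<in> carrier B \<Longrightarrow> b \<notin> L \<Longrightarrow>
               \<exists>M. fin_index_normal M B \<and> b \<notin> L <#>\<^bsub>B\<^esub> M"
    and N: "fin_index_normal N A"
  shows "\<exists>M. fin_index_normal M B \<and> phi ` (H \<inter> N) = K \<inter> M"
proof -
  interpret A: group A by fact
  interpret B: group B by fact
  note pf = iso_sub_facts[OF A B H K phi]
  have sN: "subgroup N A" using N normal_imp_subgroup unfolding fin_index_normal_def by blast
  have HN: "subgroup (H \<inter> N) A" using A.subgroups_Inter_pair[OF H sN] .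
  define L where "L = phi ` (H \<inter> N)"
  have LK: "L \<subseteq> K" unfolding L_def using pf(2) by blast
  have Kc: "K \<subseteq> carrier B" using subgroup.subset[OF K] .
  have sL: "subgroup L B"
  proof (rule B.subgroupI)
    show "L \<subseteq> carrier B" using LK Kc by blast
    show "L \<noteq> {}" unfolding L_def using subgroup.one_closed[OF HN] by blast
  next
    fix a assume "a \<in> L"
    then obtain x where x: "x \<in> H \<inter> N" "a = phi x" unfolding L_def by blast
    have "inv\<^bsub>A\<^esub> x \<in> H \<inter> N" using subgroup.m_inv_closed[OF HN x(1)] .
    moreover have "phi (inv\<^bsub>A\<^esub> x) = inv\<^bsub>B\<^esub> a" using pf(5) x by blast
    ultimately show "inv\<^bsub>B\<^esub> a \<in> L" unfolding L_def by (metis image_eqI)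
  next
    fix a b assume "a \<in> L" "b \<in> L"
    then obtain x y where x: "x \<in> H \<inter> N" "a = phi x" and y: "y \<in> H \<inter> N" "b = phi y" unfolding L_def by blast
    have "x \<otimes>\<^bsub>A\<^esub> y \<in> H \<inter> N" using subgroup.m_closed[OF HN x(1) y(1)] .
    moreover have "phi (x \<otimes>\<^bsub>A\<^esub> y) = a \<otimes>\<^bsub>B\<^esub> b" using pf(1) x y by blast
    ultimately show "a \<otimes>\<^bsub>B\<^esub> b \<in> L" unfolding L_def by (metis image_eqI)
  qed
  have nL: "L \<lhd> B" using B.central_normal[OF sL] LK cen by blast
  obtain FH where FH: "finite FH" "FH \<subseteq> H" "H \<subseteq> (H \<inter> N) <#>\<^bsub>A\<^esub> FH"
    using A.fi_restrict[OF H N] unfolding fi_def by blast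
  define F where "F = phi ` FH"
  have finF: "finite F" unfolding F_def using FH(1) by simp
  have FK: "F \<subseteq> K" unfolding F_def using FH(2) pf(2) by blast
  have KLF: "\<exists>l\<in>L. \<exists>f\<in>F. k = l \<otimes>\<^bsub>B\<^esub> f" if k: "k \<in> K" for k
  proof -
    obtain x where x: "x \<in> H" "k = phi x" using k pf(2) by blast
    then obtain a b where ab: "a \<in> H \<inter> N" "b \<in> FH" "x = a \<otimes>\<^bsub>A\<^esub> b" using FH(3) A.set_mult_mem by blast
    have "k = phi a \<otimes>\<^bsub>B\<^esub> phi b" using x ab pf(1) FH(2) by blast
    moreover have "phi a \<in> L" "phi b \<in> F" unfolding L_def F_def using ab by auto
    ultimately show ?thesis by blast
  qed
  define F' where "F' = F - L"
  define Mf where "Mf = (\<lambda>f. SOME M. fin_index_normal M B \<and> f \<notin> L <#>\<^bsub>B\<^esub> M)"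
  have Mf: "fin_index_normal (Mf f) B \<and> f \<notin> L <#>\<^bsub>B\<^esub> Mf f" if f: "f \<in> F'" for f
  proof -
    have "f \<in> carrier B" "f \<notin> L" using f FK Kc unfolding F'_def by auto
    then have "\<exists>M. fin_index_normal M B \<and> f \<notin> L <#>\<^bsub>B\<^esub> M" using SB[OF sL LK] by blast
    then show ?thesis unfolding Mf_def by (rule someI_ex)
  qed
  define M0 where "M0 = carrier B \<inter> \<Inter>(Mf ` F')"
  have M0: "fin_index_normal M0 B" unfolding M0_def
    using B.fin_index_normal_Inter[of "Mf ` F'"] finF Mf unfolding F'_def by auto
  have sM0: "subgroup M0 B" using M0 normal_imp_subgroup unfolding fin_index_normal_def by blast
  define M where "M = L <#>\<^bsub>B\<^esub> M0"
  have Mfin: "fin_index_normal M B" unfolding M_def using B.fin_index_normal_prod[OF nL M0] .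
  have "L = K \<inter> M"
  proof (rule Set.set_eqI, rule iffI)
    fix l assume l: "l \<in> L"
    then have "l \<in> M" unfolding M_def using B.subgroup_in_prod1[OF sM0] subgroup.subset[OF sL] by blast
    then show "l \<in> K \<inter> M" using l LK by blast
  next
    fix k assume k: "k \<in> K \<inter> M"
    obtain l f where lf: "l \<in> L" "f \<in> F" "k = l \<otimes>\<^bsub>B\<^esub> f" using KLF k by blast
    have lc: "l \<in> carrier B" using lf(1) LK Kc by blast
    have fc: "f \<in> carrier B" using lf(2) FK Kc by blast
    show "k \<in> L"
    proof (cases "f \<in> L")
      case True
      then show ?thesis using lf subgroup.m_closed[OF sL] by blast
    next
      case False
      then have fF': "f \<in> F'" unfolding F'_def using lf(2) by blast
      obtain l' m0 where lm: "l' \<in> L" "m0 \<in> M0" "k = l' \<otimes>\<^bsub>B\<^esub> m0" using k unfolding M_def using B.set_mult_mem by blast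
      have l'c: "l' \<in> carrier B" using lm(1) LK Kc by blast
      have m0c: "m0 \<in> carrier B" using lm(2) subgroup.mem_carrier[OF sM0] by blast
      have "f = inv\<^bsub>B\<^esub> l \<otimes>\<^bsub>B\<^esub> k" unfolding lf(3) using lc fc by simp
      also have "\<dots> = (inv\<^bsub>B\<^esub> l \<otimes>\<^bsub>B\<^esub> l') \<otimes>\<^bsub>B\<^esub> m0" unfolding lm(3) using lc l'c m0c by (simp add: B.m_assoc)
      finally have fe: "f = (inv\<^bsub>B\<^esub> l \<otimes>\<^bsub>B\<^esub> l') \<otimes>\<^bsub>B\<^esub> m0" .
      have "inv\<^bsub>B\<^esub> l \<otimes>\<^bsub>B\<^esub> l' \<in> L" using subgroup.m_closed[OF sL subgroup.m_inv_closed[OF sL lf(1)] lm(1)] .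
      moreover have "m0 \<in> Mf f" using lm(2) fF' unfolding M0_def by blast
      ultimately have "f \<in> L <#>\<^bsub>B\<^esub> Mf f" unfolding fe by (rule B.set_multI)
      then show ?thesis using Mf[OF fF'] by blast
    qed
  qed
  then show ?thesis using Mfin unfolding L_def by blast
qed


lemma quot_carrier:
  assumes A: "group A" and H: "subgroup H A" and N: "N \<lhd> A"
  shows "carrier ((A\<lparr>carrier := H <#>\<^bsub>A\<^esub> N\<rparr>) Mod N) = (\<lambda>h. N #>\<^bsub>A\<^esub> h) ` H"
proof -
  interpret A: group A by fact
  have sN: "subgroup N A" using normal_imp_subgroup[OF N] .
  have "carrier ((A\<lparr>carrier := H <#>\<^bsub>A\<^esub> N\<rparr>) Mod N) = (\<lambda>x. N #>\<^bsub>A\<^esub> x) ` (H <#>\<^bsub>A\<^esub> N)"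
    unfolding carrier_FactGroup by simp
  also have "\<dots> = (\<lambda>h. N #>\<^bsub>A\<^esub> h) ` H"
  proof (rule Set.set_eqI, rule iffI)
    fix C assume "C \<in> (\<lambda>x. N #>\<^bsub>A\<^esub> x) ` (H <#>\<^bsub>A\<^esub> N)"
    then obtain x where x: "x \<in> H <#>\<^bsub>A\<^esub> N" "C = N #>\<^bsub>A\<^esub> x" by blast
    then obtain h n where hn: "h \<in> H" "n \<in> N" "x = h \<otimes>\<^bsub>A\<^esub> n" using A.set_mult_mem by blast
    have hc: "h \<in> carrier A" and nc: "n \<in> carrier A"
      using hn subgroup.mem_carrier[OF H] subgroup.mem_carrier[OF sN] by auto
    have "x \<otimes>\<^bsub>A\<^esub> inv\<^bsub>A\<^esub> h = h \<otimes>\<^bsub>A\<^esub> n \<otimes>\<^bsub>A\<^esub> inv\<^bsub>A\<^esub> h" unfolding hn(3) by simp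
    then have "x \<otimes>\<^bsub>A\<^esub> inv\<^bsub>A\<^esub> h \<in> N" using A.normal_invE(2)[OF N hc hn(2)] by simp
    then have "N #>\<^bsub>A\<^esub> x = N #>\<^bsub>A\<^esub> h" using A.coset_eq_iff[OF sN] hc nc hn(3) by simp
    then show "C \<in> (\<lambda>h. N #>\<^bsub>A\<^esub> h) ` H" using x(2) hn(1) by blast
  next
    fix C assume "C \<in> (\<lambda>h. N #>\<^bsub>A\<^esub> h) ` H"
    then obtain h where h: "h \<in> H" "C = N #>\<^bsub>A\<^esub> h" by blast
    have "h \<in> H <#>\<^bsub>A\<^esub> N" using A.subgroup_in_prod1[OF sN subgroup.subset[OF H]] h(1) by blast
    then show "C \<in> (\<lambda>x. N #>\<^bsub>A\<^esub> x) ` (H <#>\<^bsub>A\<^esub> N)" using h(2) by blast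
  qed
  finally show ?thesis .
qed

lemma compat_iso:
  assumes A: "group A" and B: "group B" and H: "subgroup H A" and K: "subgroup K B"
    and phi: "phi \<in> iso (A\<lparr>carrier := H\<rparr>) (B\<lparr>carrier := K\<rparr>)"
    and N: "fin_index_normal N A" and M: "fin_index_normal M B"
    and eq: "phi ` (H \<inter> N) = K \<inter> M"
  shows "\<forall>h\<in>H. \<forall>h'\<in>H. N #>\<^bsub>A\<^esub> h = N #>\<^bsub>A\<^esub> h' \<longrightarrow> M #>\<^bsub>B\<^esub> phi h = M #>\<^bsub>B\<^esub> phi h'"
    and "induced_map A B H phi N M
          \<in> iso ((A\<lparr>carrier := H <#>\<^bsub>A\<^esub> N\<rparr>) Mod N) ((B\<lparr>carrier := K <#>\<^bsub>B\<^esub> M\<rparr>) Mod M)"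
proof -
  interpret A: group A by fact
  interpret B: group B by fact
  note pf = iso_sub_facts[OF A B H K phi]
  have nN: "N \<lhd> A" and nM: "M \<lhd> B" using N M unfolding fin_index_normal_def by auto
  have sN: "subgroup N A" and sM: "subgroup M B" using nN nM normal_imp_subgroup by auto
  have Hc: "\<And>h. h \<in> H \<Longrightarrow> h \<in> carrier A" using subgroup.mem_carrier[OF H] by blast
  have Kc: "\<And>k. k \<in> K \<Longrightarrow> k \<in> carrier B" using subgroup.mem_carrier[OF K] by blast
  have phiK: "\<And>h. h \<in> H \<Longrightarrow> phi h \<in> K" using pf(2) by blast
  have phidiv: "phi (h \<otimes>\<^bsub>A\<^esub> inv\<^bsub>A\<^esub> h') = phi h \<otimes>\<^bsub>B\<^esub> inv\<^bsub>B\<^esub> phi h'" if "h \<in> H" "h' \<in> H" for h h'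
    using pf(1)[OF that(1) subgroup.m_inv_closed[OF H that(2)]] pf(5)[OF that(2)] by simp
  have wd: "M #>\<^bsub>B\<^esub> phi h = M #>\<^bsub>B\<^esub> phi h'" if h: "h \<in> H" "h' \<in> H" "N #>\<^bsub>A\<^esub> h = N #>\<^bsub>A\<^esub> h'" for h h'
  proof -
    have "h \<otimes>\<^bsub>A\<^esub> inv\<^bsub>A\<^esub> h' \<in> N" using h(3) A.coset_eq_iff[OF sN Hc[OF h(1)] Hc[OF h(2)]] by simp
    moreover have "h \<otimes>\<^bsub>A\<^esub> inv\<^bsub>A\<^esub> h' \<in> H" using subgroup.m_closed[OF H h(1) subgroup.m_inv_closed[OF H h(2)]] .
    ultimately have "h \<otimes>\<^bsub>A\<^esub> inv\<^bsub>A\<^esub> h' \<in> H \<inter> N" by (rule IntI[rotated])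
    then have "phi (h \<otimes>\<^bsub>A\<^esub> inv\<^bsub>A\<^esub> h') \<in> phi ` (H \<inter> N)" by (rule imageI)
    then have "phi (h \<otimes>\<^bsub>A\<^esub> inv\<^bsub>A\<^esub> h') \<in> K \<inter> M" unfolding eq .
    then have "phi h \<otimes>\<^bsub>B\<^esub> inv\<^bsub>B\<^esub> phi h' \<in> M" using phidiv[OF h(1,2)] by simp
    then show ?thesis using B.coset_eq_iff[OF sM Kc[OF phiK[OF h(1)]] Kc[OF phiK[OF h(2)]]] by simp
  qed
  show "\<forall>h\<in>H. \<forall>h'\<in>H. N #>\<^bsub>A\<^esub> h = N #>\<^bsub>A\<^esub> h' \<longrightarrow> M #>\<^bsub>B\<^esub> phi h = M #>\<^bsub>B\<^esub> phi h'"
    using wd by blast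
  have ind: "induced_map A B H phi N M (N #>\<^bsub>A\<^esub> h) = M #>\<^bsub>B\<^esub> phi h" if h: "h \<in> H" for h
  proof -
    define h0 where "h0 = (SOME h0. h0 \<in> H \<and> N #>\<^bsub>A\<^esub> h = N #>\<^bsub>A\<^esub> h0)"
    have "h0 \<in> H \<and> N #>\<^bsub>A\<^esub> h = N #>\<^bsub>A\<^esub> h0" unfolding h0_def by (rule someI_ex) (use h in blast)
    then have "M #>\<^bsub>B\<^esub> phi h = M #>\<^bsub>B\<^esub> phi h0" using wd[OF h] by blast
    then have "M #>\<^bsub>B\<^esub> phi h0 = M #>\<^bsub>B\<^esub> phi h" by (rule sym)
    then show ?thesis unfolding induced_map_def h0_def by simp
  qed
  have cA: "carrier ((A\<lparr>carrier := H <#>\<^bsub>A\<^esub> N\<rparr>) Mod N) = (\<lambda>h. N #>\<^bsub>A\<^esub> h) ` H"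
    using quot_carrier[OF A H nN] .
  have cA': "\<exists>h\<in>H. C = N #>\<^bsub>A\<^esub> h" if "C \<in> carrier ((A\<lparr>carrier := H <#>\<^bsub>A\<^esub> N\<rparr>) Mod N)" for C
  proof -
    have "C \<in> (\<lambda>h. N #>\<^bsub>A\<^esub> h) ` H" using that unfolding cA .
    then show ?thesis by blast
  qed
  have cB: "carrier ((B\<lparr>carrier := K <#>\<^bsub>B\<^esub> M\<rparr>) Mod M) = (\<lambda>k. M #>\<^bsub>B\<^esub> k) ` K"
    using quot_carrier[OF B K nM] .
  have cB': "\<exists>k\<in>K. C = M #>\<^bsub>B\<^esub> k" if "C \<in> carrier ((B\<lparr>carrier := K <#>\<^bsub>B\<^esub> M\<rparr>) Mod M)" for C
  proof -
    have "C \<in> (\<lambda>k. M #>\<^bsub>B\<^esub> k) ` K" using that unfolding cB .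
    then show ?thesis by blast
  qed
  have hom: "induced_map A B H phi N M \<in> hom ((A\<lparr>carrier := H <#>\<^bsub>A\<^esub> N\<rparr>) Mod N) ((B\<lparr>carrier := K <#>\<^bsub>B\<^esub> M\<rparr>) Mod M)"
  proof (rule homI)
    fix C assume "C \<in> carrier ((A\<lparr>carrier := H <#>\<^bsub>A\<^esub> N\<rparr>) Mod N)"
    then obtain h where h: "h \<in> H" "C = N #>\<^bsub>A\<^esub> h" using cA' by blast
    show "induced_map A B H phi N M C \<in> carrier ((B\<lparr>carrier := K <#>\<^bsub>B\<^esub> M\<rparr>) Mod M)"
      unfolding cB h(2) ind[OF h(1)] using phiK[OF h(1)] by blast
  next
    fix C D assume "C \<in> carrier ((A\<lparr>carrier := H <#>\<^bsub>A\<^esub> N\<rparr>) Mod N)" "D \<in> carrier ((A\<lparr>carrier := H <#>\<^bsub>A\<^esub> N\<rparr>) Mod N)"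
    then obtain h h' where h: "h \<in> H" "C = N #>\<^bsub>A\<^esub> h" and h': "h' \<in> H" "D = N #>\<^bsub>A\<^esub> h'" using cA' by meson
    have "C \<otimes>\<^bsub>(A\<lparr>carrier := H <#>\<^bsub>A\<^esub> N\<rparr>) Mod N\<^esub> D = (N #>\<^bsub>A\<^esub> h) <#>\<^bsub>A\<^esub> (N #>\<^bsub>A\<^esub> h')"
      unfolding h(2) h'(2) by simp
    also have "\<dots> = N #>\<^bsub>A\<^esub> (h \<otimes>\<^bsub>A\<^esub> h')" using normal.rcos_sum[OF nN Hc[OF h(1)] Hc[OF h'(1)]] .
    finally have CD: "C \<otimes>\<^bsub>(A\<lparr>carrier := H <#>\<^bsub>A\<^esub> N\<rparr>) Mod N\<^esub> D = N #>\<^bsub>A\<^esub> (h \<otimes>\<^bsub>A\<^esub> h')" .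
    have hh: "h \<otimes>\<^bsub>A\<^esub> h' \<in> H" using subgroup.m_closed[OF H h(1) h'(1)] .
    have "induced_map A B H phi N M (C \<otimes>\<^bsub>(A\<lparr>carrier := H <#>\<^bsub>A\<^esub> N\<rparr>) Mod N\<^esub> D) = M #>\<^bsub>B\<^esub> phi (h \<otimes>\<^bsub>A\<^esub> h')"
      unfolding CD using ind[OF hh] .
    also have "\<dots> = M #>\<^bsub>B\<^esub> (phi h \<otimes>\<^bsub>B\<^esub> phi h')" using pf(1)[OF h(1) h'(1)] by simp
    also have "\<dots> = (M #>\<^bsub>B\<^esub> phi h) <#>\<^bsub>B\<^esub> (M #>\<^bsub>B\<^esub> phi h')"
      using normal.rcos_sum[OF nM Kc[OF phiK[OF h(1)]] Kc[OF phiK[OF h'(1)]]] by simp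
    also have "\<dots> = induced_map A B H phi N M C \<otimes>\<^bsub>(B\<lparr>carrier := K <#>\<^bsub>B\<^esub> M\<rparr>) Mod M\<^esub> induced_map A B H phi N M D"
      unfolding h(2) h'(2) ind[OF h(1)] ind[OF h'(1)] by simp
    finally show "induced_map A B H phi N M (C \<otimes>\<^bsub>(A\<lparr>carrier := H <#>\<^bsub>A\<^esub> N\<rparr>) Mod N\<^esub> D)
        = induced_map A B H phi N M C \<otimes>\<^bsub>(B\<lparr>carrier := K <#>\<^bsub>B\<^esub> M\<rparr>) Mod M\<^esub> induced_map A B H phi N M D" .
  qed
  have inj: "inj_on (induced_map A B H phi N M) (carrier ((A\<lparr>carrier := H <#>\<^bsub>A\<^esub> N\<rparr>) Mod N))"
  proof (rule inj_onI)
    fix C D assume "C \<in> carrier ((A\<lparr>carrier := H <#>\<^bsub>A\<^esub> N\<rparr>) Mod N)" "D \<in> carrier ((A\<lparr>carrier := H <#>\<^bsub>A\<^esub> N\<rparr>) Mod N)"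
      and e: "induced_map A B H phi N M C = induced_map A B H phi N M D"
    then obtain h h' where h: "h \<in> H" "C = N #>\<^bsub>A\<^esub> h" and h': "h' \<in> H" "D = N #>\<^bsub>A\<^esub> h'" using cA' by meson
    have "M #>\<^bsub>B\<^esub> phi h = M #>\<^bsub>B\<^esub> phi h'" using e unfolding h(2) h'(2) ind[OF h(1)] ind[OF h'(1)] .
    then have "phi h \<otimes>\<^bsub>B\<^esub> inv\<^bsub>B\<^esub> phi h' \<in> M" using B.coset_eq_iff[OF sM Kc[OF phiK[OF h(1)]] Kc[OF phiK[OF h'(1)]]] by simp
    then have "phi (h \<otimes>\<^bsub>A\<^esub> inv\<^bsub>A\<^esub> h') \<in> M" using phidiv[OF h(1) h'(1)] by simp
    moreover have hh: "h \<otimes>\<^bsub>A\<^esub> inv\<^bsub>A\<^esub> h' \<in> H" using subgroup.m_closed[OF H h(1) subgroup.m_inv_closed[OF H h'(1)]] .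
    ultimately have "phi (h \<otimes>\<^bsub>A\<^esub> inv\<^bsub>A\<^esub> h') \<in> K \<inter> M" using phiK by blast
    then have "phi (h \<otimes>\<^bsub>A\<^esub> inv\<^bsub>A\<^esub> h') \<in> phi ` (H \<inter> N)" unfolding eq .
    then obtain y where y: "y \<in> H \<inter> N" "phi (h \<otimes>\<^bsub>A\<^esub> inv\<^bsub>A\<^esub> h') = phi y" by blast
    then have "h \<otimes>\<^bsub>A\<^esub> inv\<^bsub>A\<^esub> h' = y" using pf(3) hh unfolding inj_on_def by blast
    then have "h \<otimes>\<^bsub>A\<^esub> inv\<^bsub>A\<^esub> h' \<in> N" using y(1) by blast
    then show "C = D" unfolding h(2) h'(2) using A.coset_eq_iff[OF sN Hc[OF h(1)] Hc[OF h'(1)]] by simp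
  qed
  have img: "induced_map A B H phi N M ` carrier ((A\<lparr>carrier := H <#>\<^bsub>A\<^esub> N\<rparr>) Mod N)
      = carrier ((B\<lparr>carrier := K <#>\<^bsub>B\<^esub> M\<rparr>) Mod M)"
  proof (rule Set.set_eqI, rule iffI)
    fix E assume "E \<in> induced_map A B H phi N M ` carrier ((A\<lparr>carrier := H <#>\<^bsub>A\<^esub> N\<rparr>) Mod N)"
    then obtain C where C: "C \<in> carrier ((A\<lparr>carrier := H <#>\<^bsub>A\<^esub> N\<rparr>) Mod N)" "E = induced_map A B H phi N M C" by blast
    then obtain h where h0: "h \<in> H" "C = N #>\<^bsub>A\<^esub> h" using cA' by blast
    have h: "h \<in> H" "E = induced_map A B H phi N M (N #>\<^bsub>A\<^esub> h)" using h0 C(2) by auto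
    then show "E \<in> carrier ((B\<lparr>carrier := K <#>\<^bsub>B\<^esub> M\<rparr>) Mod M)" unfolding cB h(2) ind[OF h(1)]
      using phiK[OF h(1)] by blast
  next
    fix E assume "E \<in> carrier ((B\<lparr>carrier := K <#>\<^bsub>B\<^esub> M\<rparr>) Mod M)"
    then obtain k where k: "k \<in> K" "E = M #>\<^bsub>B\<^esub> k" using cB' by blast
    then obtain h where h: "h \<in> H" "k = phi h" using pf(2) by blast
    have "E = induced_map A B H phi N M (N #>\<^bsub>A\<^esub> h)" using ind[OF h(1)] k(2) h(2) by simp
    moreover have "N #>\<^bsub>A\<^esub> h \<in> carrier ((A\<lparr>carrier := H <#>\<^bsub>A\<^esub> N\<rparr>) Mod N)" unfolding cA using h(1) by blast
    ultimately show "E \<in> induced_map A B H phi N M ` carrier ((A\<lparr>carrier := H <#>\<^bsub>A\<^esub> N\<rparr>) Mod N)" by blast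
  qed
  show "induced_map A B H phi N M
          \<in> iso ((A\<lparr>carrier := H <#>\<^bsub>A\<^esub> N\<rparr>) Mod N) ((B\<lparr>carrier := K <#>\<^bsub>B\<^esub> M\<rparr>) Mod M)"
    unfolding iso_def bij_betw_def using hom inj img by blast
qed


lemma glue:
  fixes A :: "('a, 'm) monoid_scheme" and B :: "('b, 'n) monoid_scheme"
    and H :: "'a set" and K :: "'b set" and phi :: "'a \<Rightarrow> 'b"
  assumes A: "group A" and B: "group B" and H: "subgroup H A" and K: "subgroup K B"
    and cen: "K \<subseteq> grp_center B"
    and phi: "phi \<in> iso (A\<lparr>carrier := H\<rparr>) (B\<lparr>carrier := K\<rparr>)"
    and RA: "\<And>a. a \<in> carrier A \<Longrightarrow> a \<noteq> \<one>\<^bsub>A\<^esub> \<Longrightarrow> \<exists>N. fin_index_normal N A \<and> a \<notin> N"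
    and CA: "\<And>a. a \<in> carrier A \<Longrightarrow> a \<notin> H \<Longrightarrow> \<exists>N. fin_index_normal N A \<and> a \<notin> H <#>\<^bsub>A\<^esub> N"
    and SB: "\<And>L b. subgroup L B \<Longrightarrow> L \<subseteq> K \<Longrightarrow> b \<in> carrier B \<Longrightarrow> b \<notin> L \<Longrightarrow>
               \<exists>M. fin_index_normal M B \<and> b \<notin> L <#>\<^bsub>B\<^esub> M"
  shows "\<exists>(I :: ('a set \<times> 'b set) set) FA FB. compatible A B H K phi I FA FB"
proof -
  interpret A: group A by fact
  interpret B: group B by fact
  note pf = iso_sub_facts[OF A B H K phi]
  define I :: "('a set \<times> 'b set) set" where
    "I = {(N, M). fin_index_normal N A \<and> fin_index_normal M B \<and> phi ` (H \<inter> N) = K \<inter> M}"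
  have Hc: "H \<subseteq> carrier A" using subgroup.subset[OF H] .
  have Kc: "K \<subseteq> carrier B" using subgroup.subset[OF K] .
  have partnerI: "\<exists>M. (N, M) \<in> I" if N: "fin_index_normal N A" for N
  proof -
    have "\<exists>M. fin_index_normal M B \<and> phi ` (H \<inter> N) = K \<inter> M"
      using SB by (rule partner[OF A B H K cen phi _ N])
    then show ?thesis unfolding I_def using N by blast
  qed
  have nK: "K \<lhd> B" using B.central_normal[OF K cen] .
  have KB: "(carrier A, K <#>\<^bsub>B\<^esub> M1) \<in> I" if M1: "fin_index_normal M1 B" for M1
  proof -
    have "fin_index_normal (K <#>\<^bsub>B\<^esub> M1) B" using B.fin_index_normal_prod[OF nK M1] .
    moreover have "phi ` (H \<inter> carrier A) = K" using pf(2) Hc by (simp add: Int_absorb2)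
    moreover have "K \<inter> (K <#>\<^bsub>B\<^esub> M1) = K"
    proof -
      have "subgroup M1 B" using M1 normal_imp_subgroup unfolding fin_index_normal_def by blast
      then have "K \<subseteq> K <#>\<^bsub>B\<^esub> M1" using B.subgroup_in_prod1 Kc by blast
      then show ?thesis by blast
    qed
    ultimately show ?thesis unfolding I_def using A.fin_index_normal_self by simp
  qed
  have KKM: "K <#>\<^bsub>B\<^esub> (K <#>\<^bsub>B\<^esub> M1) = K <#>\<^bsub>B\<^esub> M1" if M1: "fin_index_normal M1 B" for M1
  proof -
    have "subgroup M1 B" using M1 normal_imp_subgroup unfolding fin_index_normal_def by blast
    then have "M1 \<subseteq> carrier B" using subgroup.subset by blast
    then have "K <#>\<^bsub>B\<^esub> (K <#>\<^bsub>B\<^esub> M1) = (K <#>\<^bsub>B\<^esub> K) <#>\<^bsub>B\<^esub> M1" using B.set_mult_assoc[OF Kc Kc] by simp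
    then show ?thesis using B.subgroup_mult_id[OF K] by simp
  qed
  have fA: "\<forall>l\<in>I. fin_index_normal (fst l) A" unfolding I_def by (simp add: case_prod_beta)
  have fB: "\<forall>l\<in>I. fin_index_normal (snd l) B" unfolding I_def by (simp add: case_prod_beta)
  have one: "\<one>\<^bsub>A\<^esub> \<in> fst l \<and> \<one>\<^bsub>B\<^esub> \<in> snd l" if l: "l \<in> I" for l
  proof -
    have "fst l \<lhd> A" using fA l unfolding fin_index_normal_def by blast
    then have a: "\<one>\<^bsub>A\<^esub> \<in> fst l" by (rule subgroup.one_closed[OF normal_imp_subgroup])
    have "snd l \<lhd> B" using fB l unfolding fin_index_normal_def by blast
    then have b: "\<one>\<^bsub>B\<^esub> \<in> snd l" by (rule subgroup.one_closed[OF normal_imp_subgroup])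
    show ?thesis using a b by blast
  qed
  have e1: "carrier A \<inter> (\<Inter>l\<in>I. fst l) = {\<one>\<^bsub>A\<^esub>}"
  proof (rule Set.set_eqI, rule iffI)
    fix a assume a: "a \<in> carrier A \<inter> (\<Inter>l\<in>I. fst l)"
    show "a \<in> {\<one>\<^bsub>A\<^esub>}"
    proof (rule ccontr)
      assume "a \<notin> {\<one>\<^bsub>A\<^esub>}"
      then obtain N where N: "fin_index_normal N A" "a \<notin> N" using RA a by blast
      obtain M where NM: "(N, M) \<in> I" using partnerI[OF N(1)] by blast
      have "a \<in> (\<Inter>l\<in>I. fst l)" using a by blast
      then have "a \<in> fst (N, M)" using NM by blast
      then show False using N(2) by simp
    qed
  next
    fix a assume "a \<in> {\<one>\<^bsub>A\<^esub>}"
    then show "a \<in> carrier A \<inter> (\<Inter>l\<in>I. fst l)" using one by simp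
  qed
  have e2: "carrier A \<inter> (\<Inter>l\<in>I. H <#>\<^bsub>A\<^esub> fst l) = H"
  proof (rule Set.set_eqI, rule iffI)
    fix a assume a: "a \<in> carrier A \<inter> (\<Inter>l\<in>I. H <#>\<^bsub>A\<^esub> fst l)"
    show "a \<in> H"
    proof (rule ccontr)
      assume "a \<notin> H"
      then obtain N where N: "fin_index_normal N A" "a \<notin> H <#>\<^bsub>A\<^esub> N" using CA a by blast
      obtain M where NM: "(N, M) \<in> I" using partnerI[OF N(1)] by blast
      have "a \<in> (\<Inter>l\<in>I. H <#>\<^bsub>A\<^esub> fst l)" using a by blast
      then have "a \<in> H <#>\<^bsub>A\<^esub> fst (N, M)" using NM by blast
      then show False using N(2) by simp
    qed
  next
    fix a assume a: "a \<in> H"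
    have "a \<in> H <#>\<^bsub>A\<^esub> fst l" if l: "l \<in> I" for l
    proof -
      have "subgroup (fst l) A" using fA l normal_imp_subgroup unfolding fin_index_normal_def by blast
      then show ?thesis using A.subgroup_in_prod1 Hc a by blast
    qed
    then show "a \<in> carrier A \<inter> (\<Inter>l\<in>I. H <#>\<^bsub>A\<^esub> fst l)" using a Hc by blast
  qed
  have e3: "carrier B \<inter> (\<Inter>l\<in>I. snd l) = {\<one>\<^bsub>B\<^esub>}"
  proof (rule Set.set_eqI, rule iffI)
    fix b assume b: "b \<in> carrier B \<inter> (\<Inter>l\<in>I. snd l)"
    show "b \<in> {\<one>\<^bsub>B\<^esub>}"
    proof (rule ccontr)
      assume b1: "b \<notin> {\<one>\<^bsub>B\<^esub>}"
      show False
      proof (cases "b \<in> K")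
        case False
        then obtain M1 where M1: "fin_index_normal M1 B" "b \<notin> K <#>\<^bsub>B\<^esub> M1"
          using SB[OF K order_refl] b by blast
        have "b \<in> (\<Inter>l\<in>I. snd l)" using b by blast
        then have "b \<in> snd (carrier A, K <#>\<^bsub>B\<^esub> M1)" using KB[OF M1(1)] by blast
        then show False using M1(2) by simp
      next
        case True
        then obtain h where h: "h \<in> H" "b = phi h" using pf(2) by blast
        have "h \<noteq> \<one>\<^bsub>A\<^esub>" using h b1 pf(4) by auto
        then obtain N where N: "fin_index_normal N A" "h \<notin> N" using RA h Hc by blast
        obtain M where NM: "(N, M) \<in> I" using partnerI[OF N(1)] by blast
        then have eq: "phi ` (H \<inter> N) = K \<inter> M" unfolding I_def by blast
        have "b \<in> (\<Inter>l\<in>I. snd l)" using b by blast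
        then have "b \<in> snd (N, M)" using NM by blast
        then have "b \<in> M" by simp
        then have "b \<in> phi ` (H \<inter> N)" unfolding eq using True by blast
        then obtain x where x: "x \<in> H \<inter> N" "b = phi x" by blast
        then have "x = h" using pf(3) h unfolding inj_on_def by blast
        then show False using x N(2) by blast
      qed
    qed
  next
    fix b assume "b \<in> {\<one>\<^bsub>B\<^esub>}"
    then show "b \<in> carrier B \<inter> (\<Inter>l\<in>I. snd l)" using one by simp
  qed
  have e4: "carrier B \<inter> (\<Inter>l\<in>I. K <#>\<^bsub>B\<^esub> snd l) = K"
  proof (rule Set.set_eqI, rule iffI)
    fix b assume b: "b \<in> carrier B \<inter> (\<Inter>l\<in>I. K <#>\<^bsub>B\<^esub> snd l)"
    show "b \<in> K"
    proof (rule ccontr)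
      assume "b \<notin> K"
      then obtain M1 where M1: "fin_index_normal M1 B" "b \<notin> K <#>\<^bsub>B\<^esub> M1"
        using SB[OF K order_refl] b by blast
      have "b \<in> (\<Inter>l\<in>I. K <#>\<^bsub>B\<^esub> snd l)" using b by blast
      then have "b \<in> K <#>\<^bsub>B\<^esub> snd (carrier A, K <#>\<^bsub>B\<^esub> M1)" using KB[OF M1(1)] by blast
      then have "b \<in> K <#>\<^bsub>B\<^esub> (K <#>\<^bsub>B\<^esub> M1)" by simp
      then show False using KKM[OF M1(1)] M1(2) by simp
    qed
  next
    fix b assume b: "b \<in> K"
    have "b \<in> K <#>\<^bsub>B\<^esub> snd l" if l: "l \<in> I" for l
    proof -
      have "subgroup (snd l) B" using fB l normal_imp_subgroup unfolding fin_index_normal_def by blast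
      then show ?thesis using B.subgroup_in_prod1 Kc b by blast
    qed
    then show "b \<in> carrier B \<inter> (\<Inter>l\<in>I. K <#>\<^bsub>B\<^esub> snd l)" using b Kc by blast
  qed
  have e5: "\<forall>l\<in>I.
        (\<forall>h \<in> H. \<forall>h' \<in> H. fst l #>\<^bsub>A\<^esub> h = fst l #>\<^bsub>A\<^esub> h' \<longrightarrow>
            snd l #>\<^bsub>B\<^esub> phi h = snd l #>\<^bsub>B\<^esub> phi h') \<and>
        induced_map A B H phi (fst l) (snd l)
          \<in> iso ((A\<lparr>carrier := H <#>\<^bsub>A\<^esub> fst l\<rparr>) Mod (fst l))
                ((B\<lparr>carrier := K <#>\<^bsub>B\<^esub> snd l\<rparr>) Mod (snd l))"
  proof
    fix l assume l: "l \<in> I"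
    obtain N M where l': "l = (N, M)" by (cases l)
    have NM: "fin_index_normal N A" "fin_index_normal M B" "phi ` (H \<inter> N) = K \<inter> M"
      using l unfolding l' I_def by auto
    show "(\<forall>h \<in> H. \<forall>h' \<in> H. fst l #>\<^bsub>A\<^esub> h = fst l #>\<^bsub>A\<^esub> h' \<longrightarrow>
            snd l #>\<^bsub>B\<^esub> phi h = snd l #>\<^bsub>B\<^esub> phi h') \<and>
        induced_map A B H phi (fst l) (snd l)
          \<in> iso ((A\<lparr>carrier := H <#>\<^bsub>A\<^esub> fst l\<rparr>) Mod (fst l))
                ((B\<lparr>carrier := K <#>\<^bsub>B\<^esub> snd l\<rparr>) Mod (snd l))"
      unfolding l' fst_conv snd_conv using compat_iso[OF A B H K phi NM] by blast
  qed
  have "compatible A B H K phi I fst snd"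
    unfolding compatible_def H_filtration_def filtration_def using fA fB e1 e2 e3 e4 e5 by blast
  then show ?thesis by blast
qed


theorem corollary3p8:
  fixes A :: "('a, 'm) monoid_scheme" and B :: "('b, 'n) monoid_scheme"
    and H :: "'a set" and K :: "'b set" and phi :: "'a \<Rightarrow> 'b"
  assumes "group A" and "residually_finite A" and "subgroup H A"
    and "group B" and "subgroup K B" and "K \<subseteq> grp_center B"
    and "phi \<in> iso (A\<lparr>carrier := H\<rparr>) (B\<lparr>carrier := K\<rparr>)"
    and "(H = grp_center A \<and> polycyclic_by_finite B)
       \<or> (H \<lhd> A \<and> residually_finite (A Mod H) \<and> polycyclic_by_finite B)
       \<or> (polycyclic_by_finite A \<and> polycyclic_by_finite B)"
  shows "\<exists>(I :: ('a set \<times> 'b set) set) FA FB. compatible A B H K phi I FA FB"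
proof -
  note A = assms(1) and rfA = assms(2) and H = assms(3) and B = assms(4) and K = assms(5)
    and cen = assms(6) and phi = assms(7) and cases = assms(8)
  interpret A: group A by fact
  interpret B: group B by fact
  have pB: "polycyclic_by_finite B" using cases by blast
  have lB: "lerf B (carrier B)" using B.pbf_lerf[OF pB] .
  have SB: "\<exists>M. fin_index_normal M B \<and> b \<notin> L <#>\<^bsub>B\<^esub> M"
    if "subgroup L B" "L \<subseteq> K" "b \<in> carrier B" "b \<notin> L" for L b
    using B.lerf_sep[OF lB that(1) that(3) that(4)] .
  have RA: "\<exists>N. fin_index_normal N A \<and> a \<notin> N" if "a \<in> carrier A" "a \<noteq> \<one>\<^bsub>A\<^esub>" for a
    using rfA that unfolding residually_finite_def by blast
  have CA: "\<exists>N. fin_index_normal N A \<and> a \<notin> H <#>\<^bsub>A\<^esub> N" if a: "a \<in> carrier A" "a \<notin> H" for a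
  proof -
    consider (i) "H = grp_center A" | (ii) "H \<lhd> A" "residually_finite (A Mod H)" | (iii) "polycyclic_by_finite A"
      using cases by blast
    then show ?thesis
    proof cases
      case i
      have "\<not> (\<forall>g\<in>carrier A. a \<otimes>\<^bsub>A\<^esub> g = g \<otimes>\<^bsub>A\<^esub> a)" using a unfolding i grp_center_def by blast
      then obtain x where x: "x \<in> carrier A" "a \<otimes>\<^bsub>A\<^esub> x \<noteq> x \<otimes>\<^bsub>A\<^esub> a" by blast
      define c where "c = a \<otimes>\<^bsub>A\<^esub> x \<otimes>\<^bsub>A\<^esub> inv\<^bsub>A\<^esub> a \<otimes>\<^bsub>A\<^esub> inv\<^bsub>A\<^esub> x"
      have cc: "c \<in> carrier A" unfolding c_def using a x by simp
      have "c \<noteq> \<one>\<^bsub>A\<^esub>"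
      proof
        assume c1: "c = \<one>\<^bsub>A\<^esub>"
        have "c \<otimes>\<^bsub>A\<^esub> (x \<otimes>\<^bsub>A\<^esub> a) = a \<otimes>\<^bsub>A\<^esub> x" unfolding c_def using a x by (simp add: A.m_assoc)
        then show False using c1 x a by simp
      qed
      then obtain N where N: "fin_index_normal N A" "c \<notin> N" using RA cc by blast
      have nN: "N \<lhd> A" using N unfolding fin_index_normal_def by blast
      have sN: "subgroup N A" using normal_imp_subgroup[OF nN] .
      have "a \<notin> H <#>\<^bsub>A\<^esub> N"
      proof
        assume "a \<in> H <#>\<^bsub>A\<^esub> N"
        then obtain z n where zn: "z \<in> H" "n \<in> N" "a = z \<otimes>\<^bsub>A\<^esub> n" using A.set_mult_mem by blast
        have zc: "z \<in> carrier A" and zcomm: "\<And>g. g \<in> carrier A \<Longrightarrow> z \<otimes>\<^bsub>A\<^esub> g = g \<otimes>\<^bsub>A\<^esub> z"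
          using zn(1) unfolding i grp_center_def by auto
        have nc: "n \<in> carrier A" using zn(2) subgroup.mem_carrier[OF sN] by blast
        define y where "y = n \<otimes>\<^bsub>A\<^esub> x \<otimes>\<^bsub>A\<^esub> inv\<^bsub>A\<^esub> n"
        have yc: "y \<in> carrier A" unfolding y_def using nc x by simp
        have "c = (z \<otimes>\<^bsub>A\<^esub> y \<otimes>\<^bsub>A\<^esub> inv\<^bsub>A\<^esub> z) \<otimes>\<^bsub>A\<^esub> inv\<^bsub>A\<^esub> x"
          unfolding c_def y_def zn(3) using zc nc x by (simp add: A.m_assoc A.inv_mult_group)
        also have "z \<otimes>\<^bsub>A\<^esub> y \<otimes>\<^bsub>A\<^esub> inv\<^bsub>A\<^esub> z = y" using zcomm[OF yc] yc zc by (simp add: A.m_assoc)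
        finally have "c = y \<otimes>\<^bsub>A\<^esub> inv\<^bsub>A\<^esub> x" .
        also have "\<dots> = n \<otimes>\<^bsub>A\<^esub> (x \<otimes>\<^bsub>A\<^esub> inv\<^bsub>A\<^esub> n \<otimes>\<^bsub>A\<^esub> inv\<^bsub>A\<^esub> x)" unfolding y_def using nc x by (simp add: A.m_assoc)
        finally have ce: "c = n \<otimes>\<^bsub>A\<^esub> (x \<otimes>\<^bsub>A\<^esub> inv\<^bsub>A\<^esub> n \<otimes>\<^bsub>A\<^esub> inv\<^bsub>A\<^esub> x)" .
        have "x \<otimes>\<^bsub>A\<^esub> inv\<^bsub>A\<^esub> n \<otimes>\<^bsub>A\<^esub> inv\<^bsub>A\<^esub> x \<in> N"
          using A.normal_invE(2)[OF nN x(1) subgroup.m_inv_closed[OF sN zn(2)]] .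
        then have "c \<in> N" unfolding ce using subgroup.m_closed[OF sN zn(2)] by blast
        then show False using N(2) by simp
      qed
      then show ?thesis using N(1) by blast
    next
      case ii
      interpret nH: normal H A by fact
      have G2: "group (A Mod H)" using nH.factorgroup_is_group .
      have hom: "(\<lambda>x. H #>\<^bsub>A\<^esub> x) \<in> hom A (A Mod H)" using nH.r_coset_hom_Mod .
      have ac: "H #>\<^bsub>A\<^esub> a \<in> carrier (A Mod H)" using hom_in_carrier[OF hom a(1)] .
      have "H #>\<^bsub>A\<^esub> a \<noteq> H" using A.coset_self_iff[OF nH.subgroup_axioms a(1)] a(2) by blast
      then have "H #>\<^bsub>A\<^esub> a \<noteq> \<one>\<^bsub>A Mod H\<^esub>" by simp
      then obtain Q where Q: "fin_index_normal Q (A Mod H)" "H #>\<^bsub>A\<^esub> a \<notin> Q"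
        using ii(2) ac unfolding residually_finite_def by blast
      define N where "N = {x \<in> carrier A. H #>\<^bsub>A\<^esub> x \<in> Q}"
      have N: "fin_index_normal N A" unfolding N_def using A.preimage_fin_index_normal[OF G2 hom Q(1)] .
      have sN: "subgroup N A" using N normal_imp_subgroup unfolding fin_index_normal_def by blast
      have "H \<subseteq> N"
      proof
        fix h assume h: "h \<in> H"
        have "H #>\<^bsub>A\<^esub> h = H" using nH.rcos_const[OF A h] .
        moreover have "\<one>\<^bsub>A Mod H\<^esub> \<in> Q"
          using Q(1) normal_imp_subgroup subgroup.one_closed unfolding fin_index_normal_def by blast
        ultimately show "h \<in> N" unfolding N_def using h nH.subset by auto
      qed
      then have "H <#>\<^bsub>A\<^esub> N \<subseteq> N" using A.prod_in_subgroup[OF sN] by blast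
      moreover have "a \<notin> N" unfolding N_def using Q(2) by blast
      ultimately show ?thesis using N by blast
    next
      case iii
      show ?thesis using A.lerf_sep[OF A.pbf_lerf[OF iii] H a] .
    qed
  qed
  show ?thesis by (rule glue[OF A B H K cen phi RA CA SB])
qed


end
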